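(* Assume [H-3] and let $T_0$ and $\bar R^i$ be as in the resolvent structure lemma. For $0\le t<s\le t+T_0$ and $v\in[0,1]$, set $u(v)=s-v(s-t)$ and $\bar R_v=\mathbb M_{s-t}^{-1}R^{\cdot,1}_{s,u(v)}$, i.e. the $nd\times d$ matrix with blocks $\frac{v^{k-1}}{(k-1)!}\bar R^k_{s,u(v)}$, $k=1,\dots,n$. There exists $C>0$ (depending on [H-3], $T_0$) such that for all $s\in[t,t+T_0]$ and all $p\in\mathbb R^{nd}$, $$\int_0^1|\bar R_v^*\mathbb M_{s-t}p|^\alpha\,dv\ge C|\mathbb M_{s-t}p|^\alpha.$$
   Context: $d,n\ge1$, $\alpha\in(0,2)$. $A_t$ has $d\times d$ blocks $a^{i,j}_t$ with $a^{i,j}_t=0$ if $j<i-1$, measurable and bounded in time; [H-3]: $\underline\alpha|\xi|^2\le\langle a^{i,i-1}_t\xi,\xi\rangle\le\overline\alpha|\xi|^2$ for $\xi\in\mathbb R^d$, $i\in\{2,\dots,n\}$, and $\|a^{i,j}_t\|\le\overline\alpha$. Resolvent $\frac{d}{ds}R_{s,t}=A_sR_{s,t}$, $R_{t,t}=I$; $R^{\cdot,1}_{s,t}$ its first $d$ columns. Resolvent structure lemma: there is $T_0\in(0,1]$ such that for $0\le t\le s\le t+T_0$, $R^{\cdot,1}_{s,t}$ has blocks $\frac{(s-t)^{i-1}}{(i-1)!}\bar R^i_{s,t}$ with $\bar R^i_{s,t}\in\mathbb R^d\otimes\mathbb R^d$ continuous, non-degenerate and bounded uniformly. $\mathbb M_u=\mathrm{Diag}(I_d,uI_d,\dots,u^{n-1}I_d)$.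 *)

theory Defs
  imports "HOL-Analysis.Analysis"
begin

text \<open>Vectors of R^m are functions nat => real of which only the
entries with index < m matter; m x m matrices are functions nat => nat => real
(row, column) of which only entries with indices < m matter.  The nd x nd
matrices are organised in d x d blocks indexed 0-based by i,j < n: block (i,j)
entry (a,b) sits at position (i*d+a, j*d+b).  (The paper's block i corresponds
to our block i-1.)\<close>

definition vnorm :: "nat \<Rightarrow> (nat \<Rightarrow> real) \<Rightarrow> real" where
  "vnorm m x = sqrt (\<Sum>j<m. (x j)\<^sup>2)"

definition blk :: "nat \<Rightarrow> (nat \<Rightarrow> nat \<Rightarrow> real) \<Rightarrow> nat \<Rightarrow> nat \<Rightarrow> (nat \<Rightarrow> nat \<Rightarrow> real)" where
  "blk d M i j = (\<lambda>a b. M (i*d+a) (j*d+b))"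

definition mulv :: "nat \<Rightarrow> (nat \<Rightarrow> nat \<Rightarrow> real) \<Rightarrow> (nat \<Rightarrow> real) \<Rightarrow> nat \<Rightarrow> real" where
  "mulv m M x = (\<lambda>a. \<Sum>b<m. M a b * x b)"

definition tmulv :: "nat \<Rightarrow> (nat \<Rightarrow> nat \<Rightarrow> real) \<Rightarrow> (nat \<Rightarrow> real) \<Rightarrow> nat \<Rightarrow> real" where
  "tmulv m M x = (\<lambda>b. \<Sum>a<m. M a b * x a)"

definition nondegenerate :: "nat \<Rightarrow> (nat \<Rightarrow> nat \<Rightarrow> real) \<Rightarrow> bool" where
  "nondegenerate d M \<longleftrightarrow> (\<forall>\<xi>. (\<forall>a<d. mulv d M \<xi> a = 0) \<longrightarrow> (\<forall>b<d. \<xi> b = 0))"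

text \<open>M_u p with M_u = Diag(I_d, u I_d, ..., u^(n-1) I_d)\<close>
definition scaleM :: "nat \<Rightarrow> real \<Rightarrow> (nat \<Rightarrow> real) \<Rightarrow> nat \<Rightarrow> real" where
  "scaleM d u p = (\<lambda>j. u ^ (j div d) * p j)"

definition H3 :: "nat \<Rightarrow> nat \<Rightarrow> real \<Rightarrow> real \<Rightarrow> (real \<Rightarrow> nat \<Rightarrow> nat \<Rightarrow> real) \<Rightarrow> bool" where
  "H3 n d al au A \<longleftrightarrow> 0 < al \<and>
     (\<forall>t\<ge>0.
       (\<forall>i<n. \<forall>j<n. j + 1 < i \<longrightarrow> (\<forall>a<d. \<forall>b<d. blk d (A t) i j a b = 0)) \<and>
       (\<forall>i\<in>{1..<n}. \<forall>\<xi>.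
          al * (vnorm d \<xi>)\<^sup>2 \<le> (\<Sum>a<d. \<Sum>b<d. blk d (A t) i (i-1) a b * \<xi> b * \<xi> a) \<and>
          (\<Sum>a<d. \<Sum>b<d. blk d (A t) i (i-1) a b * \<xi> b * \<xi> a) \<le> au * (vnorm d \<xi>)\<^sup>2) \<and>
       (\<forall>i<n. \<forall>j<n. \<forall>\<xi>. vnorm d (mulv d (blk d (A t) i j) \<xi>) \<le> au * vnorm d \<xi>))"

text \<open>R is the resolvent of A: for t >= 0, s |-> R s t is the (absolutely continuous)
solution of d/ds R_{s,t} = A_s R_{s,t}, R_{t,t} = I, written in integral form.\<close>
definition is_resolvent :: "nat \<Rightarrow> (real \<Rightarrow> nat \<Rightarrow> nat \<Rightarrow> real) \<Rightarrow> (real \<Rightarrow> real \<Rightarrow> nat \<Rightarrow> nat \<Rightarrow> real) \<Rightarrow> bool" where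
  "is_resolvent N A R \<longleftrightarrow> (\<forall>t\<ge>0. \<forall>k<N. \<forall>l<N.
      continuous_on {t..} (\<lambda>s. R s t k l) \<and>
      (\<forall>s\<ge>t. R s t k l = (if k = l then 1 else 0) + integral {t..s} (\<lambda>r. \<Sum>m<N. A r k m * R r t m l)))"

text \<open>\bar R_v: the nd x d matrix with (0-based) blocks v^k/k! \bar R^k_{s,u(v)}, u(v) = s - v(s-t)\<close>
definition Rbarv :: "nat \<Rightarrow> (nat \<Rightarrow> real \<Rightarrow> real \<Rightarrow> nat \<Rightarrow> nat \<Rightarrow> real) \<Rightarrow> real \<Rightarrow> real \<Rightarrow> real \<Rightarrow> nat \<Rightarrow> nat \<Rightarrow> real" where
  "Rbarv d Rb s t v = (\<lambda>j b. v ^ (j div d) / fact (j div d) * Rb (j div d) s (s - v * (s - t)) (j mod d) b)"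

end

theory Submission
  imports Defs
begin


lemma gronwall:
  fixes \<phi> :: "real \<Rightarrow> real"
  assumes cont: "continuous_on {a..b} \<phi>" and K: "K \<ge> 0"
    and h: "\<And>\<sigma>. \<sigma> \<in> {a..b} \<Longrightarrow> \<phi> \<sigma> \<le> c + K * integral {a..\<sigma>} \<phi>"
    and s: "\<sigma> \<in> {a..b}"
  shows "\<phi> \<sigma> \<le> c * exp (K*(\<sigma>-a))"
proof -
  have as: "a \<le> \<sigma>" "\<sigma> \<le> b" using s by auto
  have cs: "continuous_on {a..\<sigma>} \<phi>" using cont continuous_on_subset as by fastforce
  define I where "I = (\<lambda>x. integral {a..x} \<phi>)"
  define \<psi> where "\<psi> = (\<lambda>x. exp (-K*(x-a)) * (c + K * I x))"
  have Ic: "continuous_on {a..\<sigma>} I" unfolding I_def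
    by (rule indefinite_integral_continuous_1[OF integrable_continuous_interval[OF cs]])
  have \<psi>c: "continuous_on {a..\<sigma>} \<psi>" unfolding \<psi>_def
    by (intro continuous_intros Ic)
  have dec: "\<psi> \<sigma> \<le> \<psi> a"
  proof (rule DERIV_nonpos_imp_decreasing_open[OF as(1) _ \<psi>c])
    fix x assume x: "a < x" "x < \<sigma>"
    have xi: "x \<in> {a..\<sigma>}" using x by auto
    have dI: "(I has_real_derivative \<phi> x) (at x)"
      using integral_has_real_derivative[OF cs xi] at_within_Icc_at[OF x] unfolding I_def by simp
    have "(\<psi> has_real_derivative (exp (-K*(x-a)) * (-K) * (c + K * I x) + exp (-K*(x-a)) * (K * \<phi> x))) (at x)"
      unfolding \<psi>_def by (auto intro!: derivative_eq_intros dI)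
    moreover have "exp (-K*(x-a)) * (-K) * (c + K * I x) + exp (-K*(x-a)) * (K * \<phi> x)
        = exp (-K*(x-a)) * K * (\<phi> x - (c + K * I x))" by (simp add: algebra_simps)
    moreover have "exp (-K*(x-a)) * K * (\<phi> x - (c + K * I x)) \<le> 0"
    proof -
      have "\<phi> x - (c + K * I x) \<le> 0" using h[of x] xi as unfolding I_def by auto
      then show ?thesis using K by (simp add: mult_nonneg_nonpos)
    qed
    ultimately show "\<exists>y. (\<psi> has_real_derivative y) (at x) \<and> y \<le> 0" by auto
  qed
  have "\<psi> a = c" unfolding \<psi>_def I_def by simp
  then have "exp (-K*(\<sigma>-a)) * (c + K * I \<sigma>) \<le> c" using dec unfolding \<psi>_def by (simp only:)
  moreover have "exp (-K*(\<sigma>-a)) = inverse (exp (K*(\<sigma>-a)))" by (simp add: exp_minus[symmetric])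
  ultimately have "inverse (exp (K*(\<sigma>-a))) * (c + K * I \<sigma>) \<le> c" by simp
  then have "c + K * I \<sigma> \<le> c * exp (K*(\<sigma>-a))"
    by (simp add: field_simps)
  then show ?thesis using h[OF s] unfolding I_def by simp
qed




lemma delta_sum:
  fixes c :: "nat \<Rightarrow> real"
  assumes "k < N" "\<And>m. m < N \<Longrightarrow> f m = (if k = m then 1 else 0)"
  shows "(\<Sum>m<N. f m * c m) = c k"
proof -
  have "(\<Sum>m<N. f m * c m) = (\<Sum>m<N. if k = m then c m else 0)"
    using assms(2) by (intro sum.cong) auto
  also have "\<dots> = c k" using assms(1) by (simp add: sum.delta)
  finally show ?thesis .
qed

locale sys =
  fixes N :: nat and A :: "real \<Rightarrow> nat \<Rightarrow> nat \<Rightarrow> real" and R :: "real \<Rightarrow> real \<Rightarrow> nat \<Rightarrow> nat \<Rightarrow> real"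
    and au :: real
  assumes Ab: "\<And>r k m. 0 \<le> r \<Longrightarrow> k < N \<Longrightarrow> m < N \<Longrightarrow> \<bar>A r k m\<bar> \<le> au"
    and au0: "au \<ge> 0"
    and Am: "\<And>k m. (\<lambda>r. A r k m) \<in> borel_measurable borel"
    and res: "is_resolvent N A R"
begin

lemma cont_sub: "continuous_on {w..} f \<Longrightarrow> continuous_on {w..b} f"
  by (rule continuous_on_subset) auto

lemma Ameas: "(\<lambda>r. A r k m) \<in> borel_measurable (lebesgue_on S)"
  using Am by (simp add: measurable_completion measurable_restrict_space1)

lemma intprod:
  assumes a: "0 \<le> a" and km: "k < N" "m < N" and x: "continuous_on {a..b} x"
  shows "(\<lambda>r. A r k m * x r) integrable_on {a..b}"
proof -
  have "compact (x ` {a..b})" by (rule compact_continuous_image[OF x compact_Icc])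
  then obtain B where B: "\<forall>y\<in>x ` {a..b}. \<bar>y\<bar> \<le> B"
    using compact_imp_bounded bounded_real by metis
  show ?thesis
  proof (rule measurable_bounded_by_integrable_imp_integrable_real[where g="\<lambda>_. au * B"])
    show "(\<lambda>r. A r k m * x r) \<in> borel_measurable (lebesgue_on {a..b})"
      by (intro borel_measurable_times Ameas continuous_imp_measurable_on_sets_lebesgue[OF x]) simp
    show "(\<lambda>_. au * B) integrable_on {a..b}" by auto
    show "{a..b} \<in> sets lebesgue" by simp
    fix r assume r: "r \<in> {a..b}"
    have "\<bar>A r k m\<bar> \<le> au" using Ab[of r k m] r a km by auto
    moreover have "\<bar>x r\<bar> \<le> B" using B r by auto
    ultimately show "\<bar>A r k m * x r\<bar> \<le> au * B"
      by (simp add: abs_mult mult_mono au0)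
  qed
qed

lemma intA:
  assumes a: "0 \<le> a" and km: "k < N" "m < N"
  shows "(\<lambda>r. A r k m) integrable_on {a..b}"
  using intprod[OF a km, of b "\<lambda>_. 1"] by simp

lemma intsum:
  assumes a: "0 \<le> a" and k: "k < N" and x: "\<And>i. i < N \<Longrightarrow> continuous_on {a..b} (\<lambda>r. x r i)"
  shows "(\<lambda>r. \<Sum>i<N. A r k i * x r i) integrable_on {a..b}"
  by (rule integrable_sum) (use intprod[OF a k _ x] in auto)

lemma RE: "0 \<le> u \<Longrightarrow> u \<le> \<sigma> \<Longrightarrow> k < N \<Longrightarrow> l < N \<Longrightarrow>
   R \<sigma> u k l = (if k = l then 1 else 0) + integral {u..\<sigma>} (\<lambda>r. \<Sum>m<N. A r k m * R r u m l)"
  using res unfolding is_resolvent_def by blast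

lemma Rcont: "0 \<le> u \<Longrightarrow> k < N \<Longrightarrow> l < N \<Longrightarrow> continuous_on {u..} (\<lambda>s. R s u k l)"
  using res unfolding is_resolvent_def by blast

lemma Rcont2: "0 \<le> u \<Longrightarrow> k < N \<Longrightarrow> l < N \<Longrightarrow> continuous_on {u..b} (\<lambda>s. R s u k l)"
  using Rcont cont_sub by blast

lemma Rrefl: "0 \<le> u \<Longrightarrow> k < N \<Longrightarrow> l < N \<Longrightarrow> R u u k l = (if k = l then 1 else 0)"
  using RE[of u u k l] by simp

lemma uniq:
  assumes w: "0 \<le> w"
    and xc: "\<And>i. i < N \<Longrightarrow> continuous_on {w..} (\<lambda>r. x r i)"
    and yc: "\<And>i. i < N \<Longrightarrow> continuous_on {w..} (\<lambda>r. y r i)"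
    and xe: "\<And>\<sigma> k. w \<le> \<sigma> \<Longrightarrow> k < N \<Longrightarrow> x \<sigma> k = x w k + integral {w..\<sigma>} (\<lambda>r. \<Sum>i<N. A r k i * x r i)"
    and ye: "\<And>\<sigma> k. w \<le> \<sigma> \<Longrightarrow> k < N \<Longrightarrow> y \<sigma> k = y w k + integral {w..\<sigma>} (\<lambda>r. \<Sum>i<N. A r k i * y r i)"
    and init: "\<And>k. k < N \<Longrightarrow> x w k = y w k"
    and s: "w \<le> s" and k: "k < N"
  shows "x s k = y s k"
proof -
  define X where "X = (\<lambda>r i. x r i - y r i)"
  have Xc: "continuous_on {w..b} (\<lambda>r. X r i)" if "i < N" for i b
    unfolding X_def using cont_sub[OF xc[OF that]] cont_sub[OF yc[OF that]]
    by (intro continuous_intros)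
  have Xe: "X \<sigma> k = integral {w..\<sigma>} (\<lambda>r. \<Sum>i<N. A r k i * X r i)" if "w \<le> \<sigma>" "k < N" for \<sigma> k
  proof -
    have ix: "(\<lambda>r. \<Sum>i<N. A r k i * x r i) integrable_on {w..\<sigma>}"
      by (rule intsum[OF w that(2)]) (use xc cont_sub in blast)
    have iy: "(\<lambda>r. \<Sum>i<N. A r k i * y r i) integrable_on {w..\<sigma>}"
      by (rule intsum[OF w that(2)]) (use yc cont_sub in blast)
    have "X \<sigma> k = integral {w..\<sigma>} (\<lambda>r. \<Sum>i<N. A r k i * x r i) - integral {w..\<sigma>} (\<lambda>r. \<Sum>i<N. A r k i * y r i)"
      unfolding X_def using xe[OF that] ye[OF that] init[OF that(2)] by simp
    also have "\<dots> = integral {w..\<sigma>} (\<lambda>r. (\<Sum>i<N. A r k i * x r i) - (\<Sum>i<N. A r k i * y r i))"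
      by (rule integral_diff[OF ix iy, symmetric])
    also have "\<dots> = integral {w..\<sigma>} (\<lambda>r. \<Sum>i<N. A r k i * X r i)"
      unfolding X_def by (simp add: sum_subtractf right_diff_distrib)
    finally show ?thesis .
  qed
  define \<phi> where "\<phi> = (\<lambda>r. \<Sum>i<N. \<bar>X r i\<bar>)"
  have \<phi>c: "continuous_on {w..s} \<phi>" unfolding \<phi>_def by (intro continuous_intros Xc) auto
  have "\<phi> s \<le> 0 * exp ((real N * au)*(s-w))"
  proof (rule gronwall[OF \<phi>c _ _])
    show "real N * au \<ge> 0" using au0 by simp
    show "s \<in> {w..s}" using s by simp
    fix \<sigma> assume \<sigma>: "\<sigma> \<in> {w..s}"
    have \<phi>i: "\<phi> integrable_on {w..\<sigma>}"
      by (rule integrable_continuous_interval, rule continuous_on_subset[OF \<phi>c]) (use \<sigma> in auto)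
    have "\<bar>X \<sigma> k\<bar> \<le> au * integral {w..\<sigma>} \<phi>" if k: "k < N" for k
    proof -
      have "\<bar>X \<sigma> k\<bar> = norm (integral {w..\<sigma>} (\<lambda>r. \<Sum>i<N. A r k i * X r i))"
        using Xe[of \<sigma> k] \<sigma> k by simp
      also have "\<dots> \<le> integral {w..\<sigma>} (\<lambda>r. au * \<phi> r)"
      proof (rule integral_norm_bound_integral)
        show "(\<lambda>r. \<Sum>i<N. A r k i * X r i) integrable_on {w..\<sigma>}"
          by (rule intsum[OF w k]) (use Xc in auto)
        show "(\<lambda>r. au * \<phi> r) integrable_on {w..\<sigma>}" using integrable_on_mult_right[OF \<phi>i] by simp
        fix r assume r: "r \<in> {w..\<sigma>}"
        have "norm (\<Sum>i<N. A r k i * X r i) \<le> (\<Sum>i<N. \<bar>A r k i * X r i\<bar>)"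
          by (simp add: sum_abs)
        also have "\<dots> \<le> (\<Sum>i<N. au * \<bar>X r i\<bar>)"
        proof (rule sum_mono)
          fix i assume "i \<in> {..<N}"
          then have "\<bar>A r k i\<bar> \<le> au" using Ab[of r k i] r w k by auto
          then show "\<bar>A r k i * X r i\<bar> \<le> au * \<bar>X r i\<bar>" by (simp add: abs_mult mult_right_mono)
        qed
        also have "\<dots> = au * \<phi> r" unfolding \<phi>_def by (simp add: sum_distrib_left)
        finally show "norm (\<Sum>i<N. A r k i * X r i) \<le> au * \<phi> r" .
      qed
      also have "\<dots> = au * integral {w..\<sigma>} \<phi>" by simp
      finally show ?thesis .
    qed
    then have "\<phi> \<sigma> \<le> (\<Sum>i<N. au * integral {w..\<sigma>} \<phi>)" unfolding \<phi>_def by (intro sum_mono) auto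
    then show "\<phi> \<sigma> \<le> 0 + real N * au * integral {w..\<sigma>} \<phi>" by simp
  qed
  then have "\<phi> s \<le> 0" by simp
  moreover have "\<bar>X s k\<bar> \<le> \<phi> s" unfolding \<phi>_def using k by (intro member_le_sum) auto
  ultimately show ?thesis unfolding X_def by simp
qed

lemma semi:
  assumes u: "0 \<le> u" "u \<le> w" and s: "w \<le> \<sigma>" and k: "k < N" and l: "l < N"
  shows "R \<sigma> u k l = (\<Sum>m<N. R \<sigma> w k m * R w u m l)"
proof -
  have w: "0 \<le> w" using u by simp
  define c where "c = (\<lambda>m. R w u m l)"
  have xc: "continuous_on {w..} (\<lambda>r. R r u i l)" if "i < N" for i
    by (rule continuous_on_subset[OF Rcont[OF u(1) that l]]) (use u in auto)
  have yc: "continuous_on {w..} (\<lambda>r. \<Sum>m<N. R r w i m * c m)" if "i < N" for i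
    by (intro continuous_intros Rcont[OF w that]) auto
  have Ic: "(\<lambda>r. \<Sum>m<N. A r k m * R r u m l) integrable_on {a..b}" if "0 \<le> a" "u \<le> a" "k < N" for a b k
  proof (rule intsum[OF that(1) that(3)])
    fix i assume i: "i < N"
    show "continuous_on {a..b} (\<lambda>r. R r u i l)"
      by (rule continuous_on_subset[OF Rcont[OF u(1) i l]]) (use that in auto)
  qed
  have xe: "R \<sigma>' u k l = R w u k l + integral {w..\<sigma>'} (\<lambda>r. \<Sum>i<N. A r k i * R r u i l)"
    if \<sigma>': "w \<le> \<sigma>'" and k: "k < N" for \<sigma>' k
  proof -
    have "R \<sigma>' u k l = (if k = l then 1 else 0) + integral {u..\<sigma>'} (\<lambda>r. \<Sum>m<N. A r k m * R r u m l)"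
      using RE[OF u(1) _ k l] u \<sigma>' by simp
    also have "\<dots> = (if k = l then 1 else 0) + integral {u..w} (\<lambda>r. \<Sum>m<N. A r k m * R r u m l)
         + integral {w..\<sigma>'} (\<lambda>r. \<Sum>m<N. A r k m * R r u m l)"
      using Henstock_Kurzweil_Integration.integral_combine[OF u(2) \<sigma>' Ic[OF u(1) order_refl k]] by simp
    also have "\<dots> = R w u k l + integral {w..\<sigma>'} (\<lambda>r. \<Sum>m<N. A r k m * R r u m l)"
      using RE[OF u(1) u(2) k l] by simp
    finally show ?thesis .
  qed
  have ye: "(\<Sum>m<N. R \<sigma>' w k m * c m) = (\<Sum>m<N. R w w k m * c m) +
        integral {w..\<sigma>'} (\<lambda>r. \<Sum>i<N. A r k i * (\<Sum>m<N. R r w i m * c m))"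
    if \<sigma>': "w \<le> \<sigma>'" and k: "k < N" for \<sigma>' k
  proof -
    define G where "G = (\<lambda>m r. \<Sum>i<N. A r k i * R r w i m)"
    have Gi: "G m integrable_on {w..\<sigma>'}" if "m < N" for m
      unfolding G_def by (rule intsum[OF w k]) (use Rcont2[OF w _ that] in auto)
    have yw: "(\<Sum>m<N. R w w k m * c m) = c k"
      by (rule delta_sum[OF k]) (use Rrefl[OF w k] in auto)
    have "(\<Sum>m<N. R \<sigma>' w k m * c m) = (\<Sum>m<N. ((if k = m then 1 else 0) + integral {w..\<sigma>'} (G m)) * c m)"
      using RE[OF w \<sigma>' k] unfolding G_def by (intro sum.cong) auto
    also have "\<dots> = c k + (\<Sum>m<N. integral {w..\<sigma>'} (G m) * c m)"
    proof -
      have "(\<Sum>m<N. ((if k = m then 1 else 0) + integral {w..\<sigma>'} (G m)) * c m)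
         = (\<Sum>m<N. (if k = m then 1 else 0) * c m) + (\<Sum>m<N. integral {w..\<sigma>'} (G m) * c m)"
        by (simp add: distrib_right sum.distrib)
      also have "(\<Sum>m<N. (if k = m then 1 else 0) * c m) = c k" by (rule delta_sum[OF k]) simp
      finally show ?thesis .
    qed
    also have "(\<Sum>m<N. integral {w..\<sigma>'} (G m) * c m) = integral {w..\<sigma>'} (\<lambda>r. \<Sum>m<N. G m r * c m)"
      by (subst integral_sum) (use Gi in \<open>auto intro: integrable_on_mult_left\<close>)
    also have "(\<lambda>r. \<Sum>m<N. G m r * c m) = (\<lambda>r. \<Sum>i<N. A r k i * (\<Sum>m<N. R r w i m * c m))"
    proof
      fix r
      have "(\<Sum>m<N. G m r * c m) = (\<Sum>m<N. \<Sum>i<N. A r k i * R r w i m * c m)"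
        unfolding G_def by (simp add: sum_distrib_right)
      also have "\<dots> = (\<Sum>i<N. \<Sum>m<N. A r k i * R r w i m * c m)" by (rule sum.swap)
      also have "\<dots> = (\<Sum>i<N. A r k i * (\<Sum>m<N. R r w i m * c m))"
        by (simp add: sum_distrib_left mult.assoc)
      finally show "(\<Sum>m<N. G m r * c m) = (\<Sum>i<N. A r k i * (\<Sum>m<N. R r w i m * c m))" .
    qed
    finally show "(\<Sum>m<N. R \<sigma>' w k m * c m) = (\<Sum>m<N. R w w k m * c m) +
        integral {w..\<sigma>'} (\<lambda>r. \<Sum>i<N. A r k i * (\<Sum>m<N. R r w i m * c m))"
      using yw by simp
  qed
  have init: "R w u k l = (\<Sum>m<N. R w w k m * c m)" if k: "k < N" for k
    using delta_sum[OF k, of "\<lambda>m. R w w k m" c] Rrefl[OF w k] unfolding c_def by auto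
  have "R \<sigma> u k l = (\<Sum>m<N. R \<sigma> w k m * c m)"
    by (rule uniq[where x="\<lambda>r i. R r u i l" and y="\<lambda>r i. \<Sum>m<N. R r w i m * c m", OF w xc yc xe ye init s k])
  then show ?thesis unfolding c_def .
qed

end

definition sc :: "nat \<Rightarrow> real \<Rightarrow> nat \<Rightarrow> real" where
  "sc d h i = h ^ (i div d)"

lemma sc_pos: "h > 0 \<Longrightarrow> sc d h i > 0" unfolding sc_def by simp

lemma sc_ratio1:
  assumes h: "0 < h" "h \<le> 1" and im: "i div d \<le> m div d + 1"
  shows "sc d h m / sc d h i \<le> 1 / h"
proof -
  have "h ^ (m div d + 1) \<le> h ^ (i div d)"
    using h im by (intro power_decreasing) auto
  then have "sc d h m * h \<le> sc d h i" unfolding sc_def by (simp add: mult.commute)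
  then show ?thesis using h sc_pos[OF h(1), of d i] by (simp add: divide_simps mult.commute)
qed

lemma sc_ratio2:
  assumes h: "0 < h" "h \<le> 1" and im: "i div d \<le> m div d"
  shows "sc d h m / sc d h i \<le> 1"
proof -
  have "h ^ (m div d) \<le> h ^ (i div d)"
    using h im by (intro power_decreasing) auto
  then show ?thesis using h sc_pos[OF h(1), of d i] unfolding sc_def by (simp add: divide_simps)
qed

locale bsys = sys +
  fixes d :: nat
  assumes band: "\<And>r i m. 0 \<le> r \<Longrightarrow> i < N \<Longrightarrow> m < N \<Longrightarrow> m div d + 1 < i div d \<Longrightarrow> A r i m = 0"
begin

definition At :: "real \<Rightarrow> real \<Rightarrow> nat \<Rightarrow> nat \<Rightarrow> real" where
  "At h r i m = A r i m * (sc d h m / sc d h i)"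

definition Rt :: "real \<Rightarrow> real \<Rightarrow> real \<Rightarrow> nat \<Rightarrow> nat \<Rightarrow> real" where
  "Rt h \<sigma> u i l = R \<sigma> u i l * (sc d h l / sc d h i)"

lemma At_bound:
  assumes h: "0 < h" "h \<le> 1" and r: "0 \<le> r" and im: "i < N" "m < N"
  shows "\<bar>At h r i m\<bar> \<le> au / h"
proof (cases "m div d + 1 < i div d")
  case True then show ?thesis unfolding At_def using band[OF r im] au0 h by simp
next
  case False
  then have "sc d h m / sc d h i \<le> 1/h" by (intro sc_ratio1[OF h]) simp
  moreover have "sc d h m / sc d h i \<ge> 0" using sc_pos[OF h(1)] by (simp add: less_imp_le)
  moreover have "\<bar>At h r i m\<bar> = \<bar>A r i m\<bar> * (sc d h m / sc d h i)"
    unfolding At_def using calculation(2) by (simp only: abs_mult abs_of_nonneg)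
  moreover have "\<bar>A r i m\<bar> * (sc d h m / sc d h i) \<le> au * (1/h)"
    by (rule mult_mono) (use calculation Ab[OF r im] au0 in auto)
  ultimately have "\<bar>At h r i m\<bar> \<le> au * (1/h)" by simp
  then show ?thesis by simp
qed

lemma At_bound2:
  assumes h: "0 < h" "h \<le> 1" and r: "0 \<le> r" and im: "i < N" "m < N" and le: "i div d \<le> m div d"
  shows "\<bar>At h r i m\<bar> \<le> au"
proof -
  have "sc d h m / sc d h i \<le> 1" by (rule sc_ratio2[OF h le])
  moreover have "sc d h m / sc d h i \<ge> 0" using sc_pos[OF h(1)] by (simp add: less_imp_le)
  moreover have "\<bar>At h r i m\<bar> = \<bar>A r i m\<bar> * (sc d h m / sc d h i)"
    unfolding At_def using calculation(2) by (simp only: abs_mult abs_of_nonneg)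
  moreover have "\<bar>A r i m\<bar> * (sc d h m / sc d h i) \<le> au * 1"
    by (rule mult_mono) (use calculation Ab[OF r im] au0 in auto)
  ultimately have "\<bar>At h r i m\<bar> \<le> au * 1" by simp
  then show ?thesis by simp
qed

lemma intAt:
  assumes a: "0 \<le> a" and i: "i < N" and x: "\<And>m. m < N \<Longrightarrow> continuous_on {a..b} (\<lambda>r. x r m)"
  shows "(\<lambda>r. \<Sum>m<N. At h r i m * x r m) integrable_on {a..b}"
proof -
  have "(\<lambda>r. \<Sum>m<N. A r i m * ((sc d h m / sc d h i) * x r m)) integrable_on {a..b}"
  proof (rule intsum[OF a i])
    fix m assume m: "m < N"
    show "continuous_on {a..b} (\<lambda>r. sc d h m / sc d h i * x r m)"
      by (rule continuous_on_mult_left[OF x[OF m]])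
  qed
  then show ?thesis unfolding At_def by (simp add: mult.assoc)
qed

lemma Rtcont: "0 \<le> u \<Longrightarrow> i < N \<Longrightarrow> l < N \<Longrightarrow> continuous_on {u..b} (\<lambda>r. Rt h r u i l)"
  unfolding Rt_def by (intro continuous_intros Rcont2) auto

lemma RtE:
  assumes h: "0 < h" and u: "0 \<le> u" "u \<le> \<sigma>" and i: "i < N" and l: "l < N"
  shows "Rt h \<sigma> u i l = (if i = l then 1 else 0) + integral {u..\<sigma>} (\<lambda>r. \<Sum>m<N. At h r i m * Rt h r u m l)"
proof -
  have "Rt h \<sigma> u i l = ((if i = l then 1 else 0) + integral {u..\<sigma>} (\<lambda>r. \<Sum>m<N. A r i m * R r u m l)) * (sc d h l / sc d h i)"
    unfolding Rt_def using RE[OF u i l] by simp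
  also have "\<dots> = (if i = l then 1 else 0) * (sc d h l / sc d h i) + integral {u..\<sigma>} (\<lambda>r. (\<Sum>m<N. A r i m * R r u m l) * (sc d h l / sc d h i))"
    by (simp only: distrib_right integral_mult_left)
  also have "(if i = l then 1 else 0) * (sc d h l / sc d h i) = (if i = l then 1 else 0)"
    using sc_pos[OF h, of d l] by auto
  also have "(\<lambda>r. (\<Sum>m<N. A r i m * R r u m l) * (sc d h l / sc d h i)) = (\<lambda>r. \<Sum>m<N. At h r i m * Rt h r u m l)"
  proof
    fix r
    have "(\<Sum>m<N. A r i m * R r u m l) * (sc d h l / sc d h i) = (\<Sum>m<N. A r i m * R r u m l * (sc d h l / sc d h i))"
      by (rule sum_distrib_right)
    also have "\<dots> = (\<Sum>m<N. At h r i m * Rt h r u m l)"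
    proof (rule sum.cong[OF refl])
      fix m
      have "sc d h m \<noteq> 0" using sc_pos[OF h] by (simp add: less_imp_neq[symmetric])
      then show "A r i m * R r u m l * (sc d h l / sc d h i) = At h r i m * Rt h r u m l"
        unfolding At_def Rt_def by (simp add: field_simps)
    qed
    finally show "(\<Sum>m<N. A r i m * R r u m l) * (sc d h l / sc d h i) = (\<Sum>m<N. At h r i m * Rt h r u m l)" .
  qed
  finally show ?thesis .
qed

lemma G1:
  assumes h: "0 < h" "h \<le> 1" and u: "0 \<le> u" and s: "u \<le> \<sigma>" "\<sigma> \<le> u + h" and l: "l < N"
  shows "(\<Sum>i<N. \<bar>Rt h \<sigma> u i l\<bar>) \<le> exp (real N * au)"
proof -
  define \<phi> where "\<phi> = (\<lambda>r. \<Sum>i<N. \<bar>Rt h r u i l\<bar>)"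
  have \<phi>c: "continuous_on {u..u+h} \<phi>" unfolding \<phi>_def
    by (intro continuous_intros Rtcont[OF u _ l]) auto
  have K: "real N * au / h \<ge> 0" using au0 h by simp
  have "\<phi> \<sigma> \<le> 1 * exp ((real N * au / h) * (\<sigma> - u))"
  proof (rule gronwall[OF \<phi>c K])
    show "\<sigma> \<in> {u..u+h}" using s by simp
    fix \<sigma>' assume \<sigma>': "\<sigma>' \<in> {u..u+h}"
    have \<phi>i: "\<phi> integrable_on {u..\<sigma>'}"
      by (rule integrable_continuous_interval, rule continuous_on_subset[OF \<phi>c]) (use \<sigma>' in auto)
    have "\<bar>Rt h \<sigma>' u i l\<bar> \<le> (if i = l then 1 else 0) + au / h * integral {u..\<sigma>'} \<phi>" if i: "i < N" for i
    proof -
      have "\<bar>Rt h \<sigma>' u i l\<bar> \<le> \<bar>if i = l then 1 else 0\<bar> + norm (integral {u..\<sigma>'} (\<lambda>r. \<Sum>m<N. At h r i m * Rt h r u m l))"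
      proof -
        have "Rt h \<sigma>' u i l = (if i = l then 1 else 0) + integral {u..\<sigma>'} (\<lambda>r. \<Sum>m<N. At h r i m * Rt h r u m l)"
          using RtE[OF h(1) u _ i l, of \<sigma>'] \<sigma>' by simp
        then show ?thesis by (simp only: real_norm_def abs_triangle_ineq)
      qed
      also have "norm (integral {u..\<sigma>'} (\<lambda>r. \<Sum>m<N. At h r i m * Rt h r u m l)) \<le> integral {u..\<sigma>'} (\<lambda>r. au / h * \<phi> r)"
      proof (rule integral_norm_bound_integral)
        show "(\<lambda>r. \<Sum>m<N. At h r i m * Rt h r u m l) integrable_on {u..\<sigma>'}"
          by (rule intAt[OF u i]) (use Rtcont[OF u _ l] in auto)
        show "(\<lambda>r. au / h * \<phi> r) integrable_on {u..\<sigma>'}" by (rule integrable_on_mult_right[OF \<phi>i])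
        fix r assume r: "r \<in> {u..\<sigma>'}"
        have "norm (\<Sum>m<N. At h r i m * Rt h r u m l) \<le> (\<Sum>m<N. \<bar>At h r i m * Rt h r u m l\<bar>)"
          by (simp add: sum_abs)
        also have "\<dots> \<le> (\<Sum>m<N. au / h * \<bar>Rt h r u m l\<bar>)"
        proof (rule sum_mono)
          fix m assume "m \<in> {..<N}"
          then have "\<bar>At h r i m\<bar> \<le> au / h" using At_bound[OF h _ i, of r m] r u by auto
          then show "\<bar>At h r i m * Rt h r u m l\<bar> \<le> au / h * \<bar>Rt h r u m l\<bar>"
            unfolding abs_mult by (rule mult_right_mono) simp
        qed
        also have "\<dots> = au / h * \<phi> r" unfolding \<phi>_def by (simp add: sum_distrib_left)
        finally show "norm (\<Sum>m<N. At h r i m * Rt h r u m l) \<le> au / h * \<phi> r" .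
      qed
      also have "integral {u..\<sigma>'} (\<lambda>r. au / h * \<phi> r) = au / h * integral {u..\<sigma>'} \<phi>" by simp
      finally show ?thesis by simp
    qed
    then have "\<phi> \<sigma>' \<le> (\<Sum>i<N. (if i = l then 1 else 0) + au / h * integral {u..\<sigma>'} \<phi>)"
      unfolding \<phi>_def by (intro sum_mono) auto
    also have "\<dots> = 1 + real N * au / h * integral {u..\<sigma>'} \<phi>"
      using l by (simp add: sum.distrib)
    finally show "\<phi> \<sigma>' \<le> 1 + real N * au / h * integral {u..\<sigma>'} \<phi>" .
  qed
  also have "\<dots> \<le> exp (real N * au)"
  proof -
    have "(real N * au / h) * (\<sigma> - u) \<le> (real N * au / h) * h"
      using s K by (intro mult_left_mono) auto
    also have "\<dots> = real N * au" using h by simp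
    finally show ?thesis by simp
  qed
  finally show ?thesis unfolding \<phi>_def .
qed

lemma G2:
  assumes h: "0 < h" "h \<le> 1" and u: "0 \<le> u" and s: "u \<le> \<sigma>" "\<sigma> \<le> u + h" and i: "i < N" and l: "l < N"
  shows "\<bar>Rt h \<sigma> u i l - (if i = l then 1 else 0)\<bar> \<le> au * exp (real N * au) * ((\<sigma> - u) / h)"
proof -
  define B where "B = exp (real N * au)"
  have "\<bar>Rt h \<sigma> u i l - (if i = l then 1 else 0)\<bar> = norm (integral {u..\<sigma>} (\<lambda>r. \<Sum>m<N. At h r i m * Rt h r u m l))"
    using RtE[OF h(1) u s(1) i l] by simp
  also have "\<dots> \<le> integral {u..\<sigma>} (\<lambda>r. au / h * B)"
  proof (rule integral_norm_bound_integral)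
    show "(\<lambda>r. \<Sum>m<N. At h r i m * Rt h r u m l) integrable_on {u..\<sigma>}"
      by (rule intAt[OF u i]) (use Rtcont[OF u _ l] in auto)
    show "(\<lambda>r. au / h * B) integrable_on {u..\<sigma>}" by auto
    fix r assume r: "r \<in> {u..\<sigma>}"
    have "norm (\<Sum>m<N. At h r i m * Rt h r u m l) \<le> (\<Sum>m<N. \<bar>At h r i m * Rt h r u m l\<bar>)"
      by (simp add: sum_abs)
    also have "\<dots> \<le> (\<Sum>m<N. au / h * \<bar>Rt h r u m l\<bar>)"
    proof (rule sum_mono)
      fix m assume "m \<in> {..<N}"
      then have "\<bar>At h r i m\<bar> \<le> au / h" using At_bound[OF h _ i, of r m] r u by auto
      then show "\<bar>At h r i m * Rt h r u m l\<bar> \<le> au / h * \<bar>Rt h r u m l\<bar>"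
        unfolding abs_mult by (rule mult_right_mono) simp
    qed
    also have "\<dots> = au / h * (\<Sum>m<N. \<bar>Rt h r u m l\<bar>)" by (simp add: sum_distrib_left)
    also have "\<dots> \<le> au / h * B"
      unfolding B_def using G1[OF h u _ _ l, of r] r s au0 h by (intro mult_left_mono) auto
    finally show "norm (\<Sum>m<N. At h r i m * Rt h r u m l) \<le> au / h * B" .
  qed
  also have "\<dots> = au * B * ((\<sigma> - u) / h)" using s by simp
  finally show ?thesis unfolding B_def .
qed

end




definition n1 :: "nat \<Rightarrow> (nat \<Rightarrow> real) \<Rightarrow> real" where
  "n1 d x = (\<Sum>a<d. \<bar>x a\<bar>)"

definition QQ :: "nat \<Rightarrow> nat \<Rightarrow> (real \<Rightarrow> nat \<Rightarrow> nat \<Rightarrow> real) \<Rightarrow> real" where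
  "QQ n d Z = (\<Sum>k<n. n1 d (Z 0 k))"

definition HA1 :: "nat \<Rightarrow> nat \<Rightarrow> real \<Rightarrow> real \<Rightarrow> real \<Rightarrow> (real \<Rightarrow> nat \<Rightarrow> nat \<Rightarrow> real) \<Rightarrow> bool" where
  "HA1 n d al au K Z \<longleftrightarrow> (\<forall>c v j. 0 \<le> c \<longrightarrow> c \<le> v \<longrightarrow> v \<le> 1 \<longrightarrow> j+1 < n \<longrightarrow>
     al*(v-c)*(n1 d (Z c (j+1)))^2 \<le> (\<Sum>a<d. Z c (j+1) a * (Z v j a - Z c j a))
        + n1 d (Z c (j+1)) * (au*(v-c)*(\<Sum>k\<le>j. n1 d (Z c k)) + K*(v-c)^2*QQ n d Z))"

definition HA2 :: "nat \<Rightarrow> nat \<Rightarrow> real \<Rightarrow> (real \<Rightarrow> nat \<Rightarrow> nat \<Rightarrow> real) \<Rightarrow> bool" where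
  "HA2 n d L Z \<longleftrightarrow> (\<forall>c v. 0\<le>c \<longrightarrow> c\<le>1 \<longrightarrow> 0\<le>v \<longrightarrow> v\<le>1 \<longrightarrow>
      n1 d (\<lambda>a. Z v 0 a - Z c 0 a) \<le> L*\<bar>v-c\<bar>*QQ n d Z)"

lemma n1_nonneg: "0 \<le> n1 d x" unfolding n1_def by (simp add: sum_nonneg)

lemma QQ_nonneg: "0 \<le> QQ n d Z" unfolding QQ_def by (simp add: sum_nonneg n1_nonneg)

lemma inner_le_n1: "(\<Sum>a<d. x a * y a) \<le> n1 d x * n1 d y"
proof -
  have "(\<Sum>a<d. x a * y a) \<le> (\<Sum>a<d. \<bar>x a\<bar> * n1 d y)"
  proof (rule sum_mono)
    fix a assume a: "a \<in> {..<d}"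
    have "\<bar>y a\<bar> \<le> n1 d y" unfolding n1_def
      using a by (intro member_le_sum) auto
    then show "x a * y a \<le> \<bar>x a\<bar> * n1 d y"
    proof -
      have "x a * y a \<le> \<bar>x a\<bar> * \<bar>y a\<bar>" by (simp add: abs_mult[symmetric])
      also have "\<dots> \<le> \<bar>x a\<bar> * n1 d y" using \<open>\<bar>y a\<bar> \<le> n1 d y\<close> by (simp add: mult_left_mono)
      finally show ?thesis .
    qed
  qed
  also have "\<dots> = n1 d x * n1 d y" unfolding n1_def by (simp add: sum_distrib_right)
  finally show ?thesis .
qed

lemma n1_diff_le: "n1 d (\<lambda>a. x a - y a) \<le> n1 d x + n1 d y"
  unfolding n1_def by (simp add: sum.distrib[symmetric] sum_mono abs_triangle_ineq4)

lemma step_real: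
  fixes al au K n x Q e d :: real
  assumes al: "al > 0" and dl: "dl > 0" and x: "x \<ge> 0" and Q: "Q \<ge> 0" and au: "au \<ge> 0" and K: "K \<ge> 0"
    and n: "n \<ge> 0" and e: "e \<ge> 0"
    and h: "al*dl*x^2 \<le> x*(2*e*Q + au*dl*n*e*Q + K*dl^2*Q)"
  shows "x \<le> (2*e/(al*dl) + au*n*e/al + K*dl/al) * Q"
proof (cases "x = 0")
  case True then show ?thesis using assms by (simp add: zero_le_mult_iff)
next
  case False
  then have xp: "x > 0" using x by simp
  have "al*dl*x \<le> 2*e*Q + au*dl*n*e*Q + K*dl^2*Q"
    using h xp by (simp add: power2_eq_square)
  then have "x \<le> (2*e*Q + au*dl*n*e*Q + K*dl^2*Q) / (al*dl)"
    using al dl by (simp add: pos_le_divide_eq mult.commute)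
  also have "\<dots> = (2*e/(al*dl) + au*n*e/al + K*dl/al) * Q"
    using al dl by (simp add: field_simps power2_eq_square)
  finally show ?thesis .
qed

lemma dl_facts:
  fixes al K eps :: real and n :: nat
  assumes al: "al > 0" and K: "K \<ge> 0" and n: "n \<ge> 1" and eps: "eps > 0"
  defines "dl \<equiv> min (1/real n) (al*eps/(3*K+3))"
  shows "dl > 0" "dl \<le> 1/real n" "K*dl/al \<le> eps/3"
proof -
  show "dl > 0" unfolding dl_def using al K n eps by simp
  show "dl \<le> 1/real n" unfolding dl_def by simp
  have "K*dl \<le> K*(al*eps/(3*K+3))" 
    using mult_left_mono[OF min.cobounded2[of "1/real n" "al*eps/(3*K+3)"] K] unfolding dl_def by simp
  also have "\<dots> = (al*eps) * (K/(3*K+3))" by simp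
  also have "\<dots> \<le> (al*eps) * (1/3)"
    using al eps K by (intro mult_left_mono) (simp_all add: divide_simps)
  finally have "K*dl \<le> al*eps/3" by simp
  then show "K*dl/al \<le> eps/3" using al by (simp add: divide_simps mult.commute)
qed

lemma e_facts:
  fixes al au dl eps :: real and n :: nat
  assumes al: "al > 0" and au: "au \<ge> 0" and n: "n \<ge> 1" and eps: "eps > 0" and dl: "dl > 0"
  defines "e \<equiv> min eps (min (al*dl*eps/6) (al*eps/(3*(au+1)*real n)))"
  shows "e > 0" "e \<le> eps" "2*e/(al*dl) \<le> eps/3" "au*real n*e/al \<le> eps/3"
proof -
  show "e > 0" unfolding e_def using al au n eps dl by simp
  show "e \<le> eps" unfolding e_def by simp
  have "e \<le> al*dl*eps/6" unfolding e_def by (meson min.cobounded1 min.cobounded2 order_trans)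
  then have "2*e/(al*dl) \<le> 2*(al*dl*eps/6)/(al*dl)" using al dl by (intro divide_right_mono) auto
  also have "\<dots> = eps/3" using al dl by simp
  finally show "2*e/(al*dl) \<le> eps/3" .
  have e3: "e \<le> al*eps/(3*(au+1)*real n)" unfolding e_def by (meson min.cobounded1 min.cobounded2 order_trans)
  have "au*real n*e \<le> au*real n*(al*eps/(3*(au+1)*real n))"
    using e3 au by (intro mult_left_mono) auto
  also have "\<dots> = (al*eps/3) * (au/(au+1))"
  proof -
    have h1: "real n \<noteq> 0" "au + 1 \<noteq> 0" using n au by auto
    have "au*real n*(al*eps/(3*(au+1)*real n)) = (au*real n)*(al*eps) / ((3*(au+1))*real n)" by simp
    also have "\<dots> = (au*(al*eps)) / (3*(au+1))" using h1 by (simp add: mult.assoc mult.left_commute)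
    also have "\<dots> = (al*eps/3) * (au/(au+1))" by simp
    finally show ?thesis .
  qed
  also have "\<dots> \<le> (al*eps/3) * 1"
    using al eps au by (intro mult_left_mono) (simp_all add: divide_simps)
  finally show "au*real n*e/al \<le> eps/3" using al by (simp add: divide_simps mult.commute)
qed

lemma propag:
  assumes al: "al > 0" and au: "au \<ge> 0" and K: "K \<ge> 0" and n: "n \<ge> 1"
  shows "j < n \<Longrightarrow> \<forall>eps>0. \<exists>\<eta>>0. \<forall>Z. HA1 n d al au K Z \<longrightarrow>
     (\<forall>v\<in>{0..1}. n1 d (Z v 0) \<le> \<eta> * QQ n d Z) \<longrightarrow>
     (\<forall>v\<in>{0..1 - real j / real n}. \<forall>k\<le>j. n1 d (Z v k) \<le> eps * QQ n d Z)"
proof (induction j)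
  case 0
  show ?case
  proof (intro allI impI)
    fix eps :: real assume "eps > 0"
    then show "\<exists>\<eta>>0. \<forall>Z. HA1 n d al au K Z \<longrightarrow>
     (\<forall>v\<in>{0..1}. n1 d (Z v 0) \<le> \<eta> * QQ n d Z) \<longrightarrow>
     (\<forall>v\<in>{0..1 - real 0 / real n}. \<forall>k\<le>0. n1 d (Z v k) \<le> eps * QQ n d Z)"
      by (intro exI[of _ eps]) auto
  qed
next
  case (Suc j)
  have jn: "Suc j < n" using Suc.prems .
  have IH: "\<forall>eps>0. \<exists>\<eta>>0. \<forall>Z. HA1 n d al au K Z \<longrightarrow>
     (\<forall>v\<in>{0..1}. n1 d (Z v 0) \<le> \<eta> * QQ n d Z) \<longrightarrow>
     (\<forall>v\<in>{0..1 - real j / real n}. \<forall>k\<le>j. n1 d (Z v k) \<le> eps * QQ n d Z)"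
    using Suc.IH jn by simp
  show ?case
  proof (intro allI impI)
    fix eps :: real assume eps: "eps > 0"
    define dl where "dl = min (1/real n) (al*eps/(3*K+3))"
    have dl: "dl > 0" "dl \<le> 1/real n" "K*dl/al \<le> eps/3"
      using dl_facts[OF al K n eps] unfolding dl_def by auto
    define e where "e = min eps (min (al*dl*eps/6) (al*eps/(3*(au+1)*real n)))"
    have e: "e > 0" "e \<le> eps" "2*e/(al*dl) \<le> eps/3" "au*real n*e/al \<le> eps/3"
      using e_facts[OF al au n eps dl(1)] unfolding e_def by auto
    obtain \<eta> where eta: "\<eta> > 0" and H: "\<forall>Z. HA1 n d al au K Z \<longrightarrow>
     (\<forall>v\<in>{0..1}. n1 d (Z v 0) \<le> \<eta> * QQ n d Z) \<longrightarrow>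
     (\<forall>v\<in>{0..1 - real j / real n}. \<forall>k\<le>j. n1 d (Z v k) \<le> e * QQ n d Z)"
      using IH e(1) by blast
    show "\<exists>\<eta>>0. \<forall>Z. HA1 n d al au K Z \<longrightarrow>
     (\<forall>v\<in>{0..1}. n1 d (Z v 0) \<le> \<eta> * QQ n d Z) \<longrightarrow>
     (\<forall>v\<in>{0..1 - real (Suc j) / real n}. \<forall>k\<le>Suc j. n1 d (Z v k) \<le> eps * QQ n d Z)"
    proof (intro exI[of _ \<eta>] conjI allI impI ballI)
      show "\<eta> > 0" by (rule eta)
      fix Z v k
      assume A1: "HA1 n d al au K Z" and sm: "\<forall>v\<in>{0..1}. n1 d (Z v 0) \<le> \<eta> * QQ n d Z"
        and v: "v \<in> {0..1 - real (Suc j) / real n}" and k: "k \<le> Suc j"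
      define Q where "Q = QQ n d Z"
      have Q0: "Q \<ge> 0" unfolding Q_def by (rule QQ_nonneg)
      have small: "\<forall>v\<in>{0..1 - real j / real n}. \<forall>k\<le>j. n1 d (Z v k) \<le> e * Q"
        using H A1 sm unfolding Q_def by blast
      have npos: "real n > 0" using n by simp
      have "real (Suc j) / real n = real j / real n + 1 / real n" by (simp add: add_divide_distrib)
      note eqq = this
      have nn: "1/real n \<ge> 0" by simp
      have v0: "0 \<le> v" "v \<le> 1 - real (Suc j)/real n" using v by auto
      have "v \<le> 1 - real j / real n" using v0 eqq nn by linarith
      then have vj: "v \<in> {0..1 - real j / real n}" using v0 by simp
      have vj2: "v + dl \<le> 1 - real j / real n" using v0 eqq dl(2) by linarith
      have jn0: "real j / real n \<ge> 0" by simp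
      show "n1 d (Z v k) \<le> eps * QQ n d Z"
      proof (cases "k \<le> j")
        case True
        then have "n1 d (Z v k) \<le> e * Q" using small vj by blast
        also have "\<dots> \<le> eps * Q" using e(2) Q0 by (simp add: mult_right_mono)
        finally show ?thesis unfolding Q_def .
      next
        case False
        then have kk: "k = Suc j" using k by simp
        define x where "x = n1 d (Z v (Suc j))"
        have x0: "x \<ge> 0" unfolding x_def by (rule n1_nonneg)
        have v'in: "v + dl \<in> {0..1 - real j / real n}" using vj vj2 dl(1) by auto
        have A1i: "al*((v+dl)-v)*x^2 \<le> (\<Sum>a<d. Z v (j+1) a * (Z (v+dl) j a - Z v j a))
          + x * (au*((v+dl)-v)*(\<Sum>k\<le>j. n1 d (Z v k)) + K*((v+dl)-v)^2*Q)"
        proof -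
          have c1: "0 \<le> v" "v \<le> v + dl" "v + dl \<le> 1" "j + 1 < n"
            using vj apply simp
            using dl(1) apply simp
            using vj2 jn0 apply linarith
            using jn by simp
          show ?thesis using A1[unfolded HA1_def, rule_format, OF c1] unfolding x_def Q_def by simp
        qed
        have inner: "(\<Sum>a<d. Z v (j+1) a * (Z (v+dl) j a - Z v j a)) \<le> x * (2*e*Q)"
        proof -
          have "(\<Sum>a<d. Z v (j+1) a * (Z (v+dl) j a - Z v j a)) \<le> x * n1 d (\<lambda>a. Z (v+dl) j a - Z v j a)"
            unfolding x_def using inner_le_n1 by simp
          also have "\<dots> \<le> x * (n1 d (Z (v+dl) j) + n1 d (Z v j))"
            using x0 n1_diff_le by (simp add: mult_left_mono)
          also have "\<dots> \<le> x * (e*Q + e*Q)"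
            using x0 small v'in vj by (intro mult_left_mono add_mono) auto
          also have "\<dots> = x * (2*e*Q)" by simp
          finally show ?thesis .
        qed
        have sumk: "(\<Sum>k\<le>j. n1 d (Z v k)) \<le> real n * e * Q"
        proof -
          have "(\<Sum>k\<le>j. n1 d (Z v k)) \<le> (\<Sum>k\<le>j. e * Q)"
            using small vj by (intro sum_mono) auto
          also have "\<dots> = real (Suc j) * (e * Q)" by simp
          also have "\<dots> \<le> real n * (e * Q)"
            using jn e(1) Q0 by (intro mult_right_mono) auto
          finally show ?thesis by simp
        qed
        have "al*dl*x^2 \<le> x*(2*e*Q) + x * (au*dl*(real n*e*Q) + K*dl^2*Q)"
        proof -
          have "x * (au*dl*(\<Sum>k\<le>j. n1 d (Z v k)) + K*dl^2*Q) \<le> x * (au*dl*(real n*e*Q) + K*dl^2*Q)"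
            using sumk x0 au dl(1) K by (intro mult_left_mono add_mono) auto
          then show ?thesis using A1i inner by simp
        qed
        then have "al*dl*x^2 \<le> x*(2*e*Q + au*dl*real n*e*Q + K*dl^2*Q)"
          by (simp add: algebra_simps)
        then have "x \<le> (2*e/(al*dl) + au*real n*e/al + K*dl/al) * Q"
          using step_real[OF al dl(1) x0 Q0 au K _ _] e(1) by simp
        also have "\<dots> \<le> (eps/3 + eps/3 + eps/3) * Q"
          using e(3,4) dl(3) Q0 by (intro mult_right_mono add_mono) auto
        finally show ?thesis unfolding kk x_def Q_def by simp
      qed
    qed
  qed
qed

lemma lip_cont:
  fixes f :: "real \<Rightarrow> real"
  assumes M: "M \<ge> 0" and h: "\<And>x y. x \<in> S \<Longrightarrow> y \<in> S \<Longrightarrow> \<bar>f x - f y\<bar> \<le> M * \<bar>x - y\<bar>"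
  shows "continuous_on S f"
  unfolding continuous_on_iff
proof (intro ballI allI impI)
  fix x e assume x: "x \<in> S" and e: "(e::real) > 0"
  show "\<exists>\<delta>>0. \<forall>x'\<in>S. dist x' x < \<delta> \<longrightarrow> dist (f x') (f x) < e"
  proof (intro exI[of _ "e/(M+1)"] conjI ballI impI)
    show "e/(M+1) > 0" using e M by simp
    fix x' assume x': "x' \<in> S" and dd: "dist x' x < e/(M+1)"
    have "dist (f x') (f x) \<le> M * dist x' x" using h[OF x' x] by (simp add: dist_real_def)
    also have "\<dots> \<le> M * (e/(M+1))" using dd M by (intro mult_left_mono) auto
    also have "\<dots> < e"
    proof -
      have "M * (e/(M+1)) = e * (M/(M+1))" by simp
      also have "\<dots> < e * 1" using e M by (intro mult_strict_left_mono) (auto simp: divide_simps)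
      finally show ?thesis by simp
    qed
    finally show "dist (f x') (f x) < e" .
  qed
qed

lemma n1_sub_abs: "\<bar>n1 d x - n1 d y\<bar> \<le> n1 d (\<lambda>a. x a - y a)"
proof -
  have "n1 d x \<le> n1 d y + n1 d (\<lambda>a. x a - y a)"
    unfolding n1_def by (simp add: sum.distrib[symmetric] sum_mono abs_triangle_ineq[of "y _" "x _ - y _", simplified])
  moreover have "n1 d y \<le> n1 d x + n1 d (\<lambda>a. x a - y a)"
    unfolding n1_def by (simp add: sum.distrib[symmetric] sum_mono abs_triangle_ineq4[of "x _" "y _", simplified] abs_minus_commute)
  ultimately show ?thesis by linarith
qed

lemma abstract_main:
  assumes al: "al > 0" and au: "au \<ge> 0" and K: "K \<ge> 0" and L: "L \<ge> 0" and n: "n \<ge> 1"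
    and alpha: "\<alpha> > 0"
  shows "\<exists>C>0. \<forall>Z. HA1 n d al au K Z \<longrightarrow> HA2 n d L Z \<longrightarrow>
           C * QQ n d Z powr \<alpha> \<le> integral {0..1} (\<lambda>v. n1 d (Z v 0) powr \<alpha>)"
proof -
  have npos: "real n > 0" using n by simp
  have nl: "n - 1 < n" using n by simp
  have pos: "(1/(2*real n)) > 0" using npos by simp
  obtain \<eta> where eta: "\<eta> > 0" and H: "\<forall>Z. HA1 n d al au K Z \<longrightarrow>
     (\<forall>v\<in>{0..1}. n1 d (Z v 0) \<le> \<eta> * QQ n d Z) \<longrightarrow>
     (\<forall>v\<in>{0..1 - real (n-1) / real n}. \<forall>k\<le>n-1. n1 d (Z v k) \<le> (1/(2*real n)) * QQ n d Z)"
    using propag[OF al au K n, where j="n-1" and d=d, OF nl, rule_format, OF pos] by blast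
  define l where "l = min (1/2) (\<eta>/(2*L+2))"
  have l: "l > 0" "l \<le> 1/2" "L * l \<le> \<eta>/2"
  proof -
    show "l > 0" unfolding l_def using eta L by auto
    show "l \<le> 1/2" unfolding l_def by (rule min.cobounded1)
    have "L*l \<le> L*(\<eta>/(2*L+2))" unfolding l_def using L by (intro mult_left_mono) auto
    also have "\<dots> = (\<eta>/2) * (L/(L+1))" by (simp add: field_simps)
    also have "\<dots> \<le> (\<eta>/2) * 1" using eta L by (intro mult_left_mono) (auto simp: divide_simps)
    finally show "L * l \<le> \<eta>/2" by simp
  qed
  have zero_in: "0 \<in> {0..1 - real (n-1) / real n}"
  proof -
    have "real (n-1) / real n \<le> 1" using n npos by (simp add: divide_simps)
    then show ?thesis by simp
  qed
  show ?thesis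
  proof (intro exI[of _ "l * (\<eta>/2) powr \<alpha>"] conjI allI impI)
    show "l * (\<eta>/2) powr \<alpha> > 0" using l eta by simp
    fix Z assume A1: "HA1 n d al au K Z" and A2: "HA2 n d L Z"
    define Q where "Q = QQ n d Z"
    have Q0: "Q \<ge> 0" unfolding Q_def by (rule QQ_nonneg)
    define g where "g = (\<lambda>v. n1 d (Z v 0))"
    have lip: "\<bar>g x - g y\<bar> \<le> (L*Q) * \<bar>x - y\<bar>" if "x \<in> {0..1}" "y \<in> {0..1}" for x y
    proof -
      have "\<bar>g x - g y\<bar> \<le> n1 d (\<lambda>a. Z x 0 a - Z y 0 a)" unfolding g_def by (rule n1_sub_abs)
      also have "\<dots> \<le> L*\<bar>x-y\<bar>*Q" using A2 that unfolding HA2_def Q_def by auto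
      finally show ?thesis by (simp add: mult_ac)
    qed
    have gc: "continuous_on {0..1} g"
      by (rule lip_cont[of "L*Q"]) (use L Q0 lip in auto)
    have g0: "g v \<ge> 0" for v unfolding g_def by (rule n1_nonneg)
    have gpc: "continuous_on {0..1} (\<lambda>v. g v powr \<alpha>)"
      by (rule continuous_on_powr') (use gc g0 alpha in auto)
    have gpi: "(\<lambda>v. g v powr \<alpha>) integrable_on {0..1}"
      by (rule integrable_continuous_interval[OF gpc])
    show "l * (\<eta>/2) powr \<alpha> * QQ n d Z powr \<alpha> \<le> integral {0..1} (\<lambda>v. n1 d (Z v 0) powr \<alpha>)"
    proof (cases "Q = 0")
      case True
      have "0 \<le> integral {0..1} (\<lambda>v. g v powr \<alpha>)" by (rule integral_nonneg[OF gpi]) simp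
      then show ?thesis using True unfolding Q_def g_def by simp
    next
      case False
      then have Qp: "Q > 0" using Q0 by simp
      have "\<exists>c\<in>{0..1}. g c > \<eta> * Q"
      proof (rule ccontr)
        assume "\<not> ?thesis"
        then have "\<forall>v\<in>{0..1}. n1 d (Z v 0) \<le> \<eta> * QQ n d Z" unfolding g_def Q_def by auto
        then have sm: "\<forall>k\<le>n-1. n1 d (Z 0 k) \<le> (1/(2*real n)) * Q"
          using H A1 zero_in unfolding Q_def by blast
        have "Q = (\<Sum>k<n. n1 d (Z 0 k))" unfolding Q_def QQ_def ..
        also have "\<dots> \<le> (\<Sum>k<n. (1/(2*real n)) * Q)"
          using sm by (intro sum_mono) auto
        also have "\<dots> = Q/2" using npos by simp
        finally show False using Qp by simp
      qed
      then obtain c where c: "c \<in> {0..1}" "g c > \<eta> * Q" by blast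
      define x0 where "x0 = (if c \<ge> 1/2 then c - l else c)"
      have I: "{x0..x0+l} \<subseteq> {0..1}" using c l unfolding x0_def by auto
      have Ic: "\<bar>v - c\<bar> \<le> l" if "v \<in> {x0..x0+l}" for v using that unfolding x0_def by (auto split: if_splits)
      have low: "(\<eta>/2 * Q) powr \<alpha> \<le> g v powr \<alpha>" if v: "v \<in> {x0..x0+l}" for v
      proof -
        have vI: "v \<in> {0..1}" using I v by auto
        have "g c - g v \<le> (L*Q) * \<bar>c - v\<bar>" using lip[OF c(1) vI] by simp
        also have "\<dots> \<le> (L*Q) * l" using Ic[OF v] L Q0 by (intro mult_left_mono) (auto simp: abs_minus_commute)
        also have "\<dots> = (L*l)*Q" by simp
        also have "\<dots> \<le> (\<eta>/2)*Q" using l(3) Q0 by (intro mult_right_mono) auto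
        finally have "\<eta>/2*Q \<le> g v" using c(2) by simp
        then show ?thesis using eta Qp alpha by (intro powr_mono2) auto
      qed
      have "l * ((\<eta>/2 * Q) powr \<alpha>) = integral {x0..x0+l} (\<lambda>v. (\<eta>/2 * Q) powr \<alpha>)"
        using l by simp
      also have "\<dots> \<le> integral {x0..x0+l} (\<lambda>v. g v powr \<alpha>)"
        by (rule integral_le) (use low integrable_on_subinterval[OF gpi I] in auto)
      also have "\<dots> \<le> integral {0..1} (\<lambda>v. g v powr \<alpha>)"
        by (rule integral_subset_le[OF I integrable_on_subinterval[OF gpi I] gpi]) simp
      finally have "l * ((\<eta>/2 * Q) powr \<alpha>) \<le> integral {0..1} (\<lambda>v. g v powr \<alpha>)" .
      moreover have "(\<eta>/2 * Q) powr \<alpha> = (\<eta>/2) powr \<alpha> * Q powr \<alpha>"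
        using eta Qp powr_mult[of "\<eta>/2" Q \<alpha>] by simp
      ultimately show ?thesis unfolding Q_def g_def by (simp add: mult_ac)
    qed
  qed
qed




lemma sum_blocks:
  fixes f :: "nat \<Rightarrow> 'a::comm_monoid_add"
  shows "(\<Sum>m<n*d. f m) = (\<Sum>k<n. \<Sum>a<d. f (k*d+a))"
proof -
  have "(\<Sum>a<d. f (k*d+a)) = sum f {k*d..<k*d+d}" for k
  proof -
    have "sum f {0+k*d..<d+k*d} = (\<Sum>i=0..<d. f (i + k*d))" by (rule sum.shift_bounds_nat_ivl)
    then show ?thesis by (simp add: atLeast0LessThan add.commute)
  qed
  then have "(\<Sum>k<n. \<Sum>a<d. f (k*d+a)) = (\<Sum>k<n. sum f {k*d..<k*d+d})" by simp
  also have "\<dots> = sum f {..<n*d}" by (rule sum.nat_group)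
  finally show ?thesis by simp
qed

lemma blk_idx: "k < n \<Longrightarrow> a < d \<Longrightarrow> k*d + a < n*(d::nat)"
proof -
  assume "k < n" "a < d"
  then have "k*d + a < k*d + d" by simp
  also have "\<dots> = (k+1)*d" by simp
  also have "\<dots> \<le> n*d" using \<open>k < n\<close> by (intro mult_right_mono) auto
  finally show ?thesis .
qed

lemma delta_sum':
  fixes c :: "nat \<Rightarrow> real"
  assumes "k < N" "\<And>m. m < N \<Longrightarrow> f m = (if m = k then 1 else 0)"
  shows "(\<Sum>m<N. c m * f m) = c k"
proof -
  have "(\<Sum>m<N. c m * f m) = (\<Sum>m<N. if k = m then c m else 0)"
    using assms(2) by (intro sum.cong) auto
  also have "\<dots> = c k" using assms(1) by (simp add: sum.delta)
  finally show ?thesis .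
qed

lemma vnorm_sq: "(vnorm d x)^2 = (\<Sum>a<d. (x a)^2)"
  unfolding vnorm_def by (simp add: sum_nonneg)

lemma vnorm_nonneg: "vnorm d x \<ge> 0" unfolding vnorm_def by (simp add: sum_nonneg)

lemma comp_le_vnorm: "a < d \<Longrightarrow> \<bar>x a\<bar> \<le> vnorm d x"
proof -
  assume a: "a < d"
  have "(x a)^2 \<le> (\<Sum>b<d. (x b)^2)" using a by (intro member_le_sum) auto
  then have "sqrt ((x a)^2) \<le> vnorm d x" unfolding vnorm_def by (rule real_sqrt_le_mono)
  then show ?thesis by simp
qed

lemma n1_le_vnorm: "n1 d x \<le> sqrt (real d) * vnorm d x"
proof -
  have "(\<Sum>a<d. \<bar>x a\<bar> * 1)^2 \<le> (\<Sum>a<d. (\<bar>x a\<bar>)^2) * (\<Sum>a<d. 1^2)"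
    by (rule Cauchy_Schwarz_ineq_sum)
  then have "(n1 d x)^2 \<le> real d * (vnorm d x)^2" unfolding n1_def by (simp add: vnorm_sq mult.commute)
  then have "sqrt ((n1 d x)^2) \<le> sqrt (real d * (vnorm d x)^2)" by (rule real_sqrt_le_mono)
  then show ?thesis using n1_nonneg[of d x] vnorm_nonneg[of d x] by (simp add: real_sqrt_mult)
qed

lemma vnorm_le_n1: "vnorm d x \<le> n1 d x"
  using L2_set_le_sum_abs[of x "{..<d}"] unfolding vnorm_def n1_def L2_set_def .

locale inst = bsys +
  fixes n :: nat and t s :: real and p :: "nat \<Rightarrow> real" and al :: real
  assumes Nnd: "N = n*d" and d1: "d \<ge> 1" and npos: "n \<ge> 1"
    and alpos: "al > 0" and t0: "0 \<le> t" and ts: "t < s" and h1: "s - t \<le> 1"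
    and coer: "\<And>r j \<xi>. 0 \<le> r \<Longrightarrow> j+1 < n \<Longrightarrow>
        al * (\<Sum>a<d. (\<xi> a)^2) \<le> (\<Sum>a<d. \<Sum>b<d. A r ((j+1)*d+a) (j*d+b) * \<xi> b * \<xi> a)"
begin

definition h :: real where "h = s - t"
definition Y where "Y u l = (\<Sum>k<N. R s u k l * p k)"
definition Z where "Z u l = sc d h l * Y u l"
definition q where "q l = sc d h l * p l"
definition Zv where "Zv v j a = Z (s - v * h) (j*d + a)"
definition Q1 where "Q1 = (\<Sum>m<N. \<bar>q m\<bar>)"
definition B where "B = exp (real N * au)"

lemma hpos: "0 < h" "h \<le> 1" unfolding h_def using ts h1 by auto

lemma Bpos: "B > 0" unfolding B_def by simp

lemma Q1_nonneg: "Q1 \<ge> 0" unfolding Q1_def by (simp add: sum_nonneg)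

lemma Zrel:
  assumes u: "t \<le> u" "u \<le> w" "w \<le> s" and l: "l < N"
  shows "Z u l = (\<Sum>m<N. Z w m * Rt h w u m l)"
proof -
  have u0: "0 \<le> u" using u t0 by simp
  have "Z u l = sc d h l * (\<Sum>k<N. (\<Sum>m<N. R s w k m * R w u m l) * p k)"
    unfolding Z_def Y_def using semi[OF u0 u(2) u(3) _ l] by simp
  also have "\<dots> = (\<Sum>k<N. \<Sum>m<N. R s w k m * R w u m l * p k * sc d h l)"
    by (simp add: sum_distrib_left sum_distrib_right mult_ac)
  also have "\<dots> = (\<Sum>m<N. \<Sum>k<N. R s w k m * R w u m l * p k * sc d h l)" by (rule sum.swap)
  also have "\<dots> = (\<Sum>m<N. Z w m * Rt h w u m l)"
  proof (rule sum.cong[OF refl])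
    fix m
    have "sc d h m \<noteq> 0" using sc_pos[OF hpos(1), of d m] by simp
    then have "Z w m * Rt h w u m l = (\<Sum>k<N. R s w k m * p k) * (R w u m l * sc d h l)"
      unfolding Z_def Y_def Rt_def by (simp add: field_simps)
    also have "\<dots> = (\<Sum>k<N. R s w k m * p k * (R w u m l * sc d h l))"
      by (rule sum_distrib_right)
    also have "\<dots> = (\<Sum>k<N. R s w k m * R w u m l * p k * sc d h l)"
      by (rule sum.cong[OF refl]) (simp add: mult_ac)
    finally show "(\<Sum>k<N. R s w k m * R w u m l * p k * sc d h l) = Z w m * Rt h w u m l" by simp
  qed
  finally show ?thesis .
qed

lemma Zs: "l < N \<Longrightarrow> Z s l = q l"
proof -
  assume l: "l < N"
  have s0: "0 \<le> s" using t0 ts by simp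
  have "Y s l = p l" unfolding Y_def
    using delta_sum'[OF l, of "\<lambda>k. R s s k l" p] Rrefl[OF s0 _ l] by (simp add: mult.commute)
  then show ?thesis unfolding Z_def q_def by simp
qed

lemma Zbound:
  assumes w: "t \<le> w" "w \<le> s" and l: "l < N"
  shows "\<bar>Z w l\<bar> \<le> B * Q1"
proof -
  have "Z w l = (\<Sum>m<N. q m * Rt h s w m l)"
    using Zrel[OF w(1) w(2) order_refl l] Zs by simp
  also have "\<bar>\<dots>\<bar> \<le> (\<Sum>m<N. \<bar>q m\<bar> * B)"
  proof -
    have "\<bar>\<Sum>m<N. q m * Rt h s w m l\<bar> \<le> (\<Sum>m<N. \<bar>q m * Rt h s w m l\<bar>)" by (rule sum_abs)
    also have "\<dots> \<le> (\<Sum>m<N. \<bar>q m\<bar> * B)"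
    proof (rule sum_mono)
      fix m assume m: "m \<in> {..<N}"
      have w0: "0 \<le> w" using w t0 by simp
      have "\<bar>Rt h s w m l\<bar> \<le> (\<Sum>i<N. \<bar>Rt h s w i l\<bar>)" using m by (intro member_le_sum) auto
      also have "\<dots> \<le> B" unfolding B_def
        by (rule G1[OF hpos w0 w(2) _ l]) (use w hpos in \<open>simp add: h_def\<close>)
      finally show "\<bar>q m * Rt h s w m l\<bar> \<le> \<bar>q m\<bar> * B" unfolding abs_mult by (rule mult_left_mono) simp
    qed
    finally show ?thesis .
  qed
  also have "\<dots> = B * Q1" unfolding Q1_def by (simp add: sum_distrib_left mult.commute)
  finally show ?thesis .
qed

lemma Zsum: "t \<le> w \<Longrightarrow> w \<le> s \<Longrightarrow> (\<Sum>m<N. \<bar>Z w m\<bar>) \<le> real N * B * Q1"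
proof -
  assume w: "t \<le> w" "w \<le> s"
  have "(\<Sum>m<N. \<bar>Z w m\<bar>) \<le> (\<Sum>m<N. B * Q1)" by (intro sum_mono Zbound[OF w]) auto
  then show ?thesis by simp
qed

lemma Zinc:
  assumes u: "t \<le> u" "u \<le> w" "w \<le> s" and l: "l < N"
  shows "Z u l - Z w l = (\<Sum>m<N. Z w m * (Rt h w u m l - (if m = l then 1 else 0)))"
proof -
  have "(\<Sum>m<N. Z w m * (if m = l then 1 else 0)) = Z w l" by (rule delta_sum'[OF l]) simp
  then show ?thesis using Zrel[OF u l] by (simp add: right_diff_distrib sum_subtractf)
qed

lemma Zv_in: "0 \<le> v \<Longrightarrow> v \<le> 1 \<Longrightarrow> t \<le> s - v * h \<and> s - v * h \<le> s"
proof -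
  assume v: "0 \<le> v" "v \<le> 1"
  have "v * h \<le> 1*h" using v hpos by (intro mult_right_mono) auto
  moreover have "0 \<le> v * h" using v hpos by simp
  ultimately show ?thesis unfolding h_def by simp
qed

lemma lip_one:
  assumes cv: "0 \<le> c" "c \<le> v" "v \<le> 1"
  shows "n1 d (\<lambda>a. Zv v 0 a - Zv c 0 a) \<le> (real d * real N * B * au * B) * (v - c) * Q1"
proof -
  define u where "u = s - v * h"
  define w where "w = s - c*h"
  have uw: "t \<le> u" "u \<le> w" "w \<le> s"
    using Zv_in[of v] Zv_in[of c] cv hpos unfolding u_def w_def by (auto intro: mult_right_mono)
  have u0: "0 \<le> u" using uw t0 by simp
  have wu: "w - u = (v - c) * h" unfolding u_def w_def by (simp add: algebra_simps)
  have wuh: "w \<le> u + h"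
  proof -
    have "(v - c) * h \<le> 1 * h" using cv hpos by (intro mult_right_mono) auto
    then show ?thesis using wu by simp
  qed
  have one: "\<bar>Zv v 0 a - Zv c 0 a\<bar> \<le> real N * B * Q1 * (au * B * (v - c))" if a: "a < d" for a
  proof -
    have aN: "a < N" using a Nnd blk_idx[of 0 n a d] npos by auto
    have "Zv v 0 a - Zv c 0 a = Z u a - Z w a" unfolding Zv_def u_def w_def by simp
    also have "\<dots> = (\<Sum>m<N. Z w m * (Rt h w u m a - (if m = a then 1 else 0)))" by (rule Zinc[OF uw aN])
    finally have "\<bar>Zv v 0 a - Zv c 0 a\<bar> \<le> (\<Sum>m<N. \<bar>Z w m * (Rt h w u m a - (if m = a then 1 else 0))\<bar>)"
      by (simp add: sum_abs)
    also have "\<dots> \<le> (\<Sum>m<N. \<bar>Z w m\<bar> * (au * B * (v - c)))"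
    proof (rule sum_mono)
      fix m assume m: "m \<in> {..<N}"
      have "\<bar>Rt h w u m a - (if m = a then 1 else 0)\<bar> \<le> au * exp (real N * au) * ((w - u) / h)"
        by (rule G2[OF hpos u0 uw(2) wuh _ aN]) (use m in auto)
      also have "\<dots> = au * B * (v - c)" unfolding B_def using wu hpos by simp
      finally show "\<bar>Z w m * (Rt h w u m a - (if m = a then 1 else 0))\<bar> \<le> \<bar>Z w m\<bar> * (au * B * (v - c))"
        unfolding abs_mult by (rule mult_left_mono) simp
    qed
    also have "\<dots> = (\<Sum>m<N. \<bar>Z w m\<bar>) * (au * B * (v - c))" by (simp add: sum_distrib_right)
    also have "\<dots> \<le> real N * B * Q1 * (au * B * (v - c))"
      using Zsum[OF _ uw(3)] uw au0 Bpos cv by (intro mult_right_mono) auto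
    finally show ?thesis .
  qed
  have "n1 d (\<lambda>a. Zv v 0 a - Zv c 0 a) \<le> (\<Sum>a<d. real N * B * Q1 * (au * B * (v - c)))"
    unfolding n1_def using one by (intro sum_mono) auto
  also have "\<dots> = (real d * real N * B * au * B) * (v - c) * Q1" by (simp add: mult_ac)
  finally show ?thesis .
qed

lemma HA2_Zv: "HA2 n d (real d * real N * B * au * B) Zv"
  unfolding HA2_def
proof (intro allI impI)
  fix c v :: real assume cv: "0 \<le> c" "c \<le> 1" "0 \<le> v" "v \<le> 1"
  show "n1 d (\<lambda>a. Zv v 0 a - Zv c 0 a) \<le> real d * real N * B * au * B * \<bar>v - c\<bar> * QQ n d Zv"
  proof -
    have QQ: "QQ n d Zv = Q1"
    proof -
      have "QQ n d Zv = (\<Sum>k<n. \<Sum>a<d. \<bar>q (k*d+a)\<bar>)"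
        unfolding QQ_def n1_def Zv_def using Zs blk_idx Nnd by (simp add: h_def)
      also have "\<dots> = Q1" unfolding Q1_def using sum_blocks[of "\<lambda>m. \<bar>q m\<bar>" n d] Nnd by simp
      finally show ?thesis .
    qed
    show ?thesis
    proof (cases "c \<le> v")
      case True
      then show ?thesis using lip_one[OF cv(1) True cv(4)] QQ by simp
    next
      case False
      have "n1 d (\<lambda>a. Zv v 0 a - Zv c 0 a) = n1 d (\<lambda>a. Zv c 0 a - Zv v 0 a)"
        unfolding n1_def by (simp add: abs_minus_commute)
      also have "\<dots> \<le> (real d * real N * B * au * B) * (c - v) * Q1"
        using lip_one[OF cv(3) _ cv(2)] False by simp
      finally show ?thesis using QQ False by simp
    qed
  qed
qed

end




lemma div_blk: "a < d \<Longrightarrow> (k*d + a) div d = (k::nat)"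
  by simp

context inst
begin

definition IA where "IA u w m l = integral {u..w} (\<lambda>r. At h r m l)"
definition EI where "EI u w m l = integral {u..w} (\<lambda>r. \<Sum>i<N. At h r m i * (Rt h r u i l - (if i = l then 1 else 0)))"

lemma At_int: "0 \<le> u \<Longrightarrow> m < N \<Longrightarrow> l < N \<Longrightarrow> (\<lambda>r. At h r m l) integrable_on {u..w}"
  unfolding At_def by (rule integrable_on_mult_left[OF intA])

lemma Ediff:
  assumes u: "t \<le> u" "u \<le> w" and m: "m < N" and l: "l < N"
  shows "Rt h w u m l - (if m = l then 1 else 0) = IA u w m l + EI u w m l"
proof -
  have u0: "0 \<le> u" using u t0 by simp
  have pt: "(\<Sum>i<N. At h r m i * Rt h r u i l) = At h r m l + (\<Sum>i<N. At h r m i * (Rt h r u i l - (if i = l then 1 else 0)))" for r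
  proof -
    have "(\<Sum>i<N. At h r m i * (if i = l then 1 else 0)) = At h r m l" by (rule delta_sum'[OF l]) simp
    then show ?thesis by (simp add: right_diff_distrib sum_subtractf)
  qed
  have i2: "(\<lambda>r. \<Sum>i<N. At h r m i * (Rt h r u i l - (if i = l then 1 else 0))) integrable_on {u..w}"
    by (rule intAt[OF u0 m]) (use Rtcont[OF u0 _ l] in \<open>auto intro: continuous_intros\<close>)
  have "Rt h w u m l - (if m = l then 1 else 0) = integral {u..w} (\<lambda>r. \<Sum>i<N. At h r m i * Rt h r u i l)"
    using RtE[OF hpos(1) u0 u(2) m l] by simp
  also have "\<dots> = integral {u..w} (\<lambda>r. At h r m l + (\<Sum>i<N. At h r m i * (Rt h r u i l - (if i = l then 1 else 0))))"
    by (simp only: pt)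
  also have "\<dots> = IA u w m l + EI u w m l"
    unfolding IA_def EI_def by (rule integral_add[OF At_int[OF u0 m l] i2])
  finally show ?thesis .
qed

lemma Ebound:
  assumes u: "t \<le> u" "u \<le> w" "w \<le> u + h" and m: "m < N" and l: "l < N"
  shows "\<bar>EI u w m l\<bar> \<le> real N * au^2 * B * ((w - u) / h)^2"
proof -
  have u0: "0 \<le> u" using u t0 by simp
  have "\<bar>EI u w m l\<bar> \<le> integral {u..w} (\<lambda>r. real N * (au / h) * (au * B * ((w - u) / h)))"
    unfolding EI_def real_norm_def[symmetric]
  proof (rule integral_norm_bound_integral)
    show "(\<lambda>r. \<Sum>i<N. At h r m i * (Rt h r u i l - (if i = l then 1 else 0))) integrable_on {u..w}"
      by (rule intAt[OF u0 m]) (use Rtcont[OF u0 _ l] in \<open>auto intro: continuous_intros\<close>)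
    show "(\<lambda>r. real N * (au / h) * (au * B * ((w - u) / h))) integrable_on {u..w}" by auto
    fix r assume r: "r \<in> {u..w}"
    have "norm (\<Sum>i<N. At h r m i * (Rt h r u i l - (if i = l then 1 else 0)))
        \<le> (\<Sum>i<N. \<bar>At h r m i * (Rt h r u i l - (if i = l then 1 else 0))\<bar>)" by (simp add: sum_abs)
    also have "\<dots> \<le> (\<Sum>i<N. (au / h) * (au * B * ((w - u) / h)))"
    proof (rule sum_mono)
      fix i assume i: "i \<in> {..<N}"
      have a1: "\<bar>At h r m i\<bar> \<le> au / h" using At_bound[OF hpos _ m, of r i] r u0 i by auto
      have "\<bar>Rt h r u i l - (if i = l then 1 else 0)\<bar> \<le> au * exp (real N * au) * ((r - u) / h)"
        by (rule G2[OF hpos u0]) (use r u i l in auto)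
      also have "\<dots> \<le> au * B * ((w - u) / h)" unfolding B_def
        using r hpos au0 by (intro mult_left_mono divide_right_mono) auto
      finally have a2: "\<bar>Rt h r u i l - (if i = l then 1 else 0)\<bar> \<le> au * B * ((w - u) / h)" .
      show "\<bar>At h r m i * (Rt h r u i l - (if i = l then 1 else 0))\<bar> \<le> (au / h) * (au * B * ((w - u) / h))"
        unfolding abs_mult by (rule mult_mono[OF a1 a2]) (use au0 hpos in auto)
    qed
    also have "\<dots> = real N * (au / h) * (au * B * ((w - u) / h))" by simp
    finally show "norm (\<Sum>i<N. At h r m i * (Rt h r u i l - (if i = l then 1 else 0)))
        \<le> real N * (au / h) * (au * B * ((w - u) / h))" .
  qed
  also have "\<dots> = real N * au^2 * B * ((w - u) / h)^2"
    using u hpos by (simp add: power2_eq_square field_simps)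
  finally show ?thesis .
qed

lemma Zinc2:
  assumes u: "t \<le> u" "u \<le> w" "w \<le> s" and l: "l < N"
  shows "Z u l - Z w l = (\<Sum>m<N. Z w m * IA u w m l) + (\<Sum>m<N. Z w m * EI u w m l)"
  using Zinc[OF u l] Ediff[OF u(1,2) _ l] by (simp add: distrib_left sum.distrib)

lemma IA_zero:
  assumes u: "t \<le> u" and k: "j + 1 < k" "k < n" and a: "a < d" and b: "b < d" and j: "j < n"
  shows "IA u w (k*d+b) (j*d+a) = 0"
proof -
  have "IA u w (k*d+b) (j*d+a) = integral {u..w} (\<lambda>r. 0)"
    unfolding IA_def
  proof (rule integral_cong)
    fix r assume r: "r \<in> {u..w}"
    then have r0: "0 \<le> r" using u t0 by auto
    have "A r (k*d+b) (j*d+a) = 0"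
      by (rule band[OF r0]) (use blk_idx[OF k(2) b] blk_idx[OF j a] Nnd k a b in auto)
    then show "At h r (k*d+b) (j*d+a) = 0" unfolding At_def by simp
  qed
  then show ?thesis by simp
qed

lemma IA_bound:
  assumes u: "t \<le> u" "u \<le> w" and kj: "k \<le> j" and j: "j < n" and a: "a < d" and b: "b < d"
  shows "\<bar>IA u w (k*d+b) (j*d+a)\<bar> \<le> au * (w - u)"
proof -
  have u0: "0 \<le> u" using u t0 by simp
  have kn: "k < n" using kj j by simp
  have mN: "k*d+b < N" "j*d+a < N" using blk_idx[OF kn b] blk_idx[OF j a] Nnd by auto
  have "\<bar>IA u w (k*d+b) (j*d+a)\<bar> \<le> integral {u..w} (\<lambda>r. au)"
    unfolding IA_def real_norm_def[symmetric]
  proof (rule integral_norm_bound_integral)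
    show "(\<lambda>r. At h r (k*d+b) (j*d+a)) integrable_on {u..w}" by (rule At_int[OF u0 mN])
    show "(\<lambda>r. au) integrable_on {u..w}" by auto
    fix r assume r: "r \<in> {u..w}"
    show "norm (At h r (k*d+b) (j*d+a)) \<le> au"
      using At_bound2[OF hpos _ mN] r u0 kj a b by auto
  qed
  also have "\<dots> = au * (w - u)" using u by simp
  finally show ?thesis .
qed

lemma At_sub:
  assumes a: "a < d" and b: "b < d"
  shows "At h r ((j+1)*d+b) (j*d+a) = A r ((j+1)*d+b) (j*d+a) / h"
proof -
  have e1: "((j+1)*d+b) div d = j+1" by (rule div_blk[OF b])
  have e2: "(j*d+a) div d = j" by (rule div_blk[OF a])
  have "sc d h (j*d+a) / sc d h ((j+1)*d+b) = 1 / h"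
    unfolding sc_def e1 e2 using hpos by simp
  then show ?thesis unfolding At_def by simp
qed

lemma Tlow:
  assumes u: "t \<le> u" "u \<le> w" and j: "j + 1 < n"
  shows "(\<Sum>a<d. \<Sum>b<d. \<xi> a * \<xi> b * IA u w ((j+1)*d+b) (j*d+a)) \<ge> ((w - u) / h) * al * (\<Sum>a<d. (\<xi> a)^2)"
proof -
  have u0: "0 \<le> u" using u t0 by simp
  have jn: "j < n" using j by simp
  have mN: "(j+1)*d+b < N" "j*d+a < N" if "a < d" "b < d" for a b
    using blk_idx[OF j that(2)] blk_idx[OF jn that(1)] Nnd by auto
  have ints: "(\<lambda>r. \<xi> a * \<xi> b * At h r ((j+1)*d+b) (j*d+a)) integrable_on {u..w}" if "a < d" "b < d" for a b
    using integrable_on_mult_right[OF At_int[OF u0 mN[OF that]]] .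
  have "(\<Sum>a<d. \<Sum>b<d. \<xi> a * \<xi> b * IA u w ((j+1)*d+b) (j*d+a))
      = (\<Sum>a<d. integral {u..w} (\<lambda>r. \<Sum>b<d. \<xi> a * \<xi> b * At h r ((j+1)*d+b) (j*d+a)))"
    unfolding IA_def by (intro sum.cong refl, subst integral_sum) (use ints in auto)
  also have "\<dots> = integral {u..w} (\<lambda>r. \<Sum>a<d. \<Sum>b<d. \<xi> a * \<xi> b * At h r ((j+1)*d+b) (j*d+a))"
    by (subst integral_sum) (use ints in \<open>auto intro: integrable_sum\<close>)
  also have "\<dots> \<ge> integral {u..w} (\<lambda>r. (al / h) * (\<Sum>a<d. (\<xi> a)^2))"
  proof (rule integral_le)
    show "(\<lambda>r. (al / h) * (\<Sum>a<d. (\<xi> a)^2)) integrable_on {u..w}" by auto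
    show "(\<lambda>r. \<Sum>a<d. \<Sum>b<d. \<xi> a * \<xi> b * At h r ((j+1)*d+b) (j*d+a)) integrable_on {u..w}"
      by (intro integrable_sum) (use ints in auto)
    fix r assume r: "r \<in> {u..w}"
    then have r0: "0 \<le> r" using u0 by auto
    have "(\<Sum>a<d. \<Sum>b<d. \<xi> a * \<xi> b * At h r ((j+1)*d+b) (j*d+a))
        = (\<Sum>a<d. \<Sum>b<d. \<xi> a * \<xi> b * A r ((j+1)*d+b) (j*d+a) / h)"
    proof (intro sum.cong refl)
      fix a b assume ab: "a \<in> {..<d}" "b \<in> {..<d}"
      show "\<xi> a * \<xi> b * At h r ((j+1)*d+b) (j*d+a) = \<xi> a * \<xi> b * A r ((j+1)*d+b) (j*d+a) / h"
        using At_sub[of a b r j] ab by simp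
    qed
    also have "\<dots> = (\<Sum>a<d. \<Sum>b<d. \<xi> a * \<xi> b * A r ((j+1)*d+b) (j*d+a)) / h"
      by (simp only: sum_divide_distrib)
    also have "(\<Sum>a<d. \<Sum>b<d. \<xi> a * \<xi> b * A r ((j+1)*d+b) (j*d+a))
        = (\<Sum>b<d. \<Sum>a<d. \<xi> a * \<xi> b * A r ((j+1)*d+b) (j*d+a))" by (rule sum.swap)
    also have "\<dots> = (\<Sum>a<d. \<Sum>b<d. A r ((j+1)*d+a) (j*d+b) * \<xi> b * \<xi> a)"
      by (simp add: mult_ac)
    finally have eq: "(\<Sum>a<d. \<Sum>b<d. \<xi> a * \<xi> b * At h r ((j+1)*d+b) (j*d+a))
        = (\<Sum>a<d. \<Sum>b<d. A r ((j+1)*d+a) (j*d+b) * \<xi> b * \<xi> a) / h" .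
    have "al * (\<Sum>a<d. (\<xi> a)^2) \<le> (\<Sum>a<d. \<Sum>b<d. A r ((j+1)*d+a) (j*d+b) * \<xi> b * \<xi> a)"
      by (rule coer[OF r0 j])
    then have "(al * (\<Sum>a<d. (\<xi> a)^2)) / h \<le> (\<Sum>a<d. \<Sum>b<d. A r ((j+1)*d+a) (j*d+b) * \<xi> b * \<xi> a) / h"
      using hpos by (intro divide_right_mono) auto
    then show "(al / h) * (\<Sum>a<d. (\<xi> a)^2) \<le> (\<Sum>a<d. \<Sum>b<d. \<xi> a * \<xi> b * At h r ((j+1)*d+b) (j*d+a))"
      using eq by simp
  qed
  also have "integral {u..w} (\<lambda>r. (al / h) * (\<Sum>a<d. (\<xi> a)^2)) = ((w - u) / h) * al * (\<Sum>a<d. (\<xi> a)^2)"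
    using u by simp
  finally show ?thesis by simp
qed

lemma QQ_Zv: "QQ n d Zv = Q1"
proof -
  have "QQ n d Zv = (\<Sum>k<n. \<Sum>a<d. \<bar>q (k*d+a)\<bar>)"
    unfolding QQ_def n1_def Zv_def using Zs blk_idx Nnd by (simp add: h_def)
  also have "\<dots> = Q1" unfolding Q1_def using sum_blocks[of "\<lambda>m. \<bar>q m\<bar>" n d] Nnd by simp
  finally show ?thesis .
qed

lemma uw_facts:
  assumes cv: "0 \<le> c" "c \<le> v" "v \<le> 1"
  shows "t \<le> s - v * h" "s - v * h \<le> s - c * h" "s - c * h \<le> s"
    "(s - c * h) - (s - v * h) = (v - c) * h" "s - c * h \<le> (s - v * h) + h"
proof -
  show "t \<le> s - v * h" "s - c * h \<le> s" using Zv_in[of v] Zv_in[of c] cv by auto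
  show "s - v * h \<le> s - c * h" using cv hpos by (simp add: mult_right_mono)
  show "(s - c * h) - (s - v * h) = (v - c) * h" by (simp add: algebra_simps)
  have "(v - c) * h \<le> 1 * h" using cv hpos by (intro mult_right_mono) auto
  then show "s - c * h \<le> (s - v * h) + h" by (simp add: algebra_simps)
qed

lemma HA1_Zv: "HA1 n d (al / real d) au (real N^2 * au^2 * B^2) Zv"
  unfolding HA1_def
proof (intro allI impI)
  fix c v :: real and j :: nat
  assume cv: "0 \<le> c" "c \<le> v" "v \<le> 1" and j: "j+1 < n"
  define u where "u = s - v * h"
  define w where "w = s - c * h"
  have uw: "t \<le> u" "u \<le> w" "w \<le> s" and wu: "w - u = (v - c) * h" and wuh: "w \<le> u + h"
    using uw_facts[OF cv] unfolding u_def w_def by auto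
  have u0: "0 \<le> u" using uw t0 by simp
  define \<xi> where "\<xi> = Zv c (j+1)"
  have \<xi>w: "\<xi> b = Z w ((j+1)*d+b)" for b unfolding \<xi>_def Zv_def w_def by simp
  define \<delta> where "\<delta> = v - c"
  have \<delta>0: "\<delta> \<ge> 0" unfolding \<delta>_def using cv by simp
  have jn: "j < n" using j by simp
  have lN: "j*d+a < N" if "a < d" for a using blk_idx[OF jn that] Nnd by simp
  define K where "K = real N^2 * au^2 * B^2"
  define Tk where "Tk k = (\<Sum>a<d. \<Sum>b<d. \<xi> a * Z w (k*d+b) * IA u w (k*d+b) (j*d+a))" for k
  define T where "T = (\<Sum>a<d. \<xi> a * (\<Sum>m<N. Z w m * IA u w m (j*d+a)))"
  define Et where "Et = (\<Sum>a<d. \<xi> a * (\<Sum>m<N. Z w m * EI u w m (j*d+a)))"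
  have D: "(\<Sum>a<d. \<xi> a * (Zv v j a - Zv c j a)) = T + Et"
  proof -
    have "(\<Sum>a<d. \<xi> a * (Zv v j a - Zv c j a)) = (\<Sum>a<d. \<xi> a * ((\<Sum>m<N. Z w m * IA u w m (j*d+a)) + (\<Sum>m<N. Z w m * EI u w m (j*d+a))))"
    proof (rule sum.cong[OF refl])
      fix a assume a: "a \<in> {..<d}"
      have "Zv v j a - Zv c j a = Z u (j*d+a) - Z w (j*d+a)" unfolding Zv_def u_def w_def by simp
      also have "\<dots> = (\<Sum>m<N. Z w m * IA u w m (j*d+a)) + (\<Sum>m<N. Z w m * EI u w m (j*d+a))"
        by (rule Zinc2[OF uw lN]) (use a in simp)
      finally show "\<xi> a * (Zv v j a - Zv c j a) = \<xi> a * ((\<Sum>m<N. Z w m * IA u w m (j*d+a)) + (\<Sum>m<N. Z w m * EI u w m (j*d+a)))"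
        by simp
    qed
    also have "\<dots> = T + Et" unfolding T_def Et_def by (simp add: distrib_left sum.distrib)
    finally show ?thesis .
  qed
  have Tsplit: "T = (\<Sum>k<n. Tk k)"
  proof -
    have "T = (\<Sum>a<d. \<xi> a * (\<Sum>k<n. \<Sum>b<d. Z w (k*d+b) * IA u w (k*d+b) (j*d+a)))"
      unfolding T_def Nnd by (simp only: sum_blocks)
    also have "\<dots> = (\<Sum>a<d. \<Sum>k<n. \<Sum>b<d. \<xi> a * Z w (k*d+b) * IA u w (k*d+b) (j*d+a))"
      by (simp add: sum_distrib_left mult.assoc)
    also have "\<dots> = (\<Sum>k<n. Tk k)" unfolding Tk_def by (rule sum.swap)
    finally show ?thesis .
  qed
  have Tk0: "Tk k = 0" if "k \<in> {..<n} - {..<Suc (Suc j)}" for k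
  proof -
    have k: "j + 1 < k" "k < n" using that by auto
    show ?thesis unfolding Tk_def using IA_zero[OF uw(1) k _ _ jn] by simp
  qed
  have Tsum: "(\<Sum>k<n. Tk k) = (\<Sum>k\<le>j. Tk k) + Tk (j+1)"
  proof -
    have "(\<Sum>k<n. Tk k) = (\<Sum>k<Suc (Suc j). Tk k)"
      by (rule sum.mono_neutral_right) (use j Tk0 in auto)
    also have "\<dots> = (\<Sum>k<Suc j. Tk k) + Tk (Suc j)" by simp
    also have "(\<Sum>k<Suc j. Tk k) = (\<Sum>k\<le>j. Tk k)" by (simp only: lessThan_Suc_atMost)
    finally show ?thesis by simp
  qed
  have Tj1: "\<delta> * al * (\<Sum>a<d. (\<xi> a)^2) \<le> Tk (j+1)"
  proof -
    have "Tk (j+1) = (\<Sum>a<d. \<Sum>b<d. \<xi> a * \<xi> b * IA u w ((j+1)*d+b) (j*d+a))"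
      unfolding Tk_def \<xi>w ..
    moreover have "(w - u) / h = \<delta>" using wu hpos unfolding \<delta>_def by simp
    ultimately show ?thesis using Tlow[OF uw(1,2) j, of \<xi>] by simp
  qed
  have Tkb: "\<bar>Tk k\<bar> \<le> n1 d \<xi> * n1 d (Zv c k) * au * \<delta>" if k: "k \<le> j" for k
  proof -
    have "\<bar>Tk k\<bar> \<le> (\<Sum>a<d. \<Sum>b<d. \<bar>\<xi> a\<bar> * \<bar>Z w (k*d+b)\<bar> * (au * \<delta>))"
      unfolding Tk_def
    proof (rule order_trans[OF sum_abs], rule sum_mono, rule order_trans[OF sum_abs], rule sum_mono)
      fix a b assume a: "a \<in> {..<d}" and b: "b \<in> {..<d}"
      have "\<bar>IA u w (k*d+b) (j*d+a)\<bar> \<le> au * (w - u)"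
        by (rule IA_bound[OF uw(1,2) k jn]) (use a b in auto)
      also have "\<dots> \<le> au * \<delta>"
      proof -
        have "w - u \<le> \<delta>" using wu hpos \<delta>0 unfolding \<delta>_def by (simp add: mult_left_le)
        then show ?thesis using au0 by (simp add: mult_left_mono)
      qed
      finally have "\<bar>IA u w (k*d+b) (j*d+a)\<bar> \<le> au * \<delta>" .
      then show "\<bar>\<xi> a * Z w (k*d+b) * IA u w (k*d+b) (j*d+a)\<bar> \<le> \<bar>\<xi> a\<bar> * \<bar>Z w (k*d+b)\<bar> * (au * \<delta>)"
        unfolding abs_mult by (intro mult_left_mono) auto
    qed
    also have "\<dots> = (\<Sum>a<d. \<Sum>b<d. \<bar>\<xi> a\<bar> * \<bar>Z w (k*d+b)\<bar>) * (au * \<delta>)"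
      by (simp add: sum_distrib_right)
    also have "(\<Sum>a<d. \<Sum>b<d. \<bar>\<xi> a\<bar> * \<bar>Z w (k*d+b)\<bar>) = n1 d \<xi> * n1 d (Zv c k)"
      unfolding n1_def Zv_def w_def sum_product ..
    finally show ?thesis by (simp add: mult_ac)
  qed
  have Eb: "\<bar>Et\<bar> \<le> n1 d \<xi> * (K * \<delta>^2 * Q1)"
  proof -
    have eb: "\<bar>EI u w m (j*d+a)\<bar> \<le> real N * au^2 * B * \<delta>^2" if "m < N" "a < d" for m a
    proof -
      have "\<bar>EI u w m (j*d+a)\<bar> \<le> real N * au^2 * B * ((w - u) / h)^2"
        by (rule Ebound[OF uw(1,2) wuh that(1) lN[OF that(2)]])
      also have "(w - u) / h = \<delta>" using wu hpos unfolding \<delta>_def by simp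
      finally show ?thesis .
    qed
    have "\<bar>Et\<bar> \<le> (\<Sum>a<d. \<bar>\<xi> a\<bar> * (\<Sum>m<N. \<bar>Z w m\<bar> * (real N * au^2 * B * \<delta>^2)))"
      unfolding Et_def
    proof (rule order_trans[OF sum_abs], rule sum_mono)
      fix a assume a: "a \<in> {..<d}"
      have "\<bar>\<Sum>m<N. Z w m * EI u w m (j*d+a)\<bar> \<le> (\<Sum>m<N. \<bar>Z w m\<bar> * (real N * au^2 * B * \<delta>^2))"
      proof (rule order_trans[OF sum_abs], rule sum_mono)
        fix m assume m: "m \<in> {..<N}"
        show "\<bar>Z w m * EI u w m (j*d+a)\<bar> \<le> \<bar>Z w m\<bar> * (real N * au^2 * B * \<delta>^2)"
          unfolding abs_mult by (rule mult_left_mono) (use eb m a in auto)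
      qed
      then show "\<bar>\<xi> a * (\<Sum>m<N. Z w m * EI u w m (j*d+a))\<bar> \<le> \<bar>\<xi> a\<bar> * (\<Sum>m<N. \<bar>Z w m\<bar> * (real N * au^2 * B * \<delta>^2))"
        unfolding abs_mult by (rule mult_left_mono) simp
    qed
    also have "\<dots> = n1 d \<xi> * ((\<Sum>m<N. \<bar>Z w m\<bar>) * (real N * au^2 * B * \<delta>^2))"
      unfolding n1_def by (simp add: sum_distrib_right)
    also have "\<dots> \<le> n1 d \<xi> * ((real N * B * Q1) * (real N * au^2 * B * \<delta>^2))"
      by (intro mult_left_mono mult_right_mono Zsum[OF _ uw(3)]) (use uw n1_nonneg au0 Bpos in auto)
    also have "\<dots> = n1 d \<xi> * (K * \<delta>^2 * Q1)" unfolding K_def by (simp add: power2_eq_square mult_ac)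
    finally show ?thesis .
  qed
  have n1sq: "(n1 d \<xi>)^2 \<le> real d * (\<Sum>a<d. (\<xi> a)^2)"
  proof -
    have "n1 d \<xi> \<le> sqrt (real d) * vnorm d \<xi>" by (rule n1_le_vnorm)
    then have "(n1 d \<xi>)^2 \<le> (sqrt (real d) * vnorm d \<xi>)^2"
      using n1_nonneg by (intro power_mono) auto
    also have "\<dots> = real d * (\<Sum>a<d. (\<xi> a)^2)" by (simp add: power_mult_distrib vnorm_sq)
    finally show ?thesis .
  qed
  have alp: "al / real d * \<delta> * (n1 d \<xi>)^2 \<le> \<delta> * al * (\<Sum>a<d. (\<xi> a)^2)"
  proof -
    have True: "al \<ge> 0" using alpos by simp
    have dpos: "real d > 0" using d1 by simp
    have "al / real d * \<delta> * (n1 d \<xi>)^2 \<le> al / real d * \<delta> * (real d * (\<Sum>a<d. (\<xi> a)^2))"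
      using n1sq True \<delta>0 dpos by (intro mult_left_mono) auto
    also have "\<dots> = \<delta> * al * (\<Sum>a<d. (\<xi> a)^2)" using dpos by simp
    finally show ?thesis .
  qed
  have "\<delta> * al * (\<Sum>a<d. (\<xi> a)^2) \<le> (\<Sum>a<d. \<xi> a * (Zv v j a - Zv c j a)) - (\<Sum>k\<le>j. Tk k) - Et"
    using Tj1 D Tsplit Tsum by simp
  also have "\<dots> \<le> (\<Sum>a<d. \<xi> a * (Zv v j a - Zv c j a)) + (\<Sum>k\<le>j. n1 d \<xi> * n1 d (Zv c k) * au * \<delta>) + n1 d \<xi> * (K * \<delta>^2 * Q1)"
  proof -
    have "- (\<Sum>k\<le>j. Tk k) \<le> (\<Sum>k\<le>j. n1 d \<xi> * n1 d (Zv c k) * au * \<delta>)"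
    proof -
      have "- (\<Sum>k\<le>j. Tk k) \<le> (\<Sum>k\<le>j. \<bar>Tk k\<bar>)"
        using sum_abs[of Tk "{..j}"] by (simp add: abs_le_iff)
      also have "\<dots> \<le> (\<Sum>k\<le>j. n1 d \<xi> * n1 d (Zv c k) * au * \<delta>)" by (intro sum_mono Tkb) auto
      finally show ?thesis .
    qed
    moreover have "- Et \<le> n1 d \<xi> * (K * \<delta>^2 * Q1)" using Eb by (simp add: abs_le_iff)
    ultimately show ?thesis by simp
  qed
  also have "\<dots> = (\<Sum>a<d. \<xi> a * (Zv v j a - Zv c j a)) + n1 d \<xi> * (au * \<delta> * (\<Sum>k\<le>j. n1 d (Zv c k)) + K * \<delta>^2 * Q1)"
    by (simp add: sum_distrib_left distrib_left mult_ac)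
  finally have fin: "al / real d * \<delta> * (n1 d \<xi>)^2 \<le> (\<Sum>a<d. \<xi> a * (Zv v j a - Zv c j a)) + n1 d \<xi> * (au * \<delta> * (\<Sum>k\<le>j. n1 d (Zv c k)) + K * \<delta>^2 * Q1)"
    using alp by linarith
  show "al / real d * (v - c) * (n1 d (Zv c (j + 1)))\<^sup>2
       \<le> (\<Sum>a<d. Zv c (j + 1) a * (Zv v j a - Zv c j a)) +
          n1 d (Zv c (j + 1)) * (au * (v - c) * (\<Sum>k\<le>j. n1 d (Zv c k)) + real N^2 * au^2 * B^2 * (v - c)\<^sup>2 * QQ n d Zv)"
    using fin unfolding \<xi>_def \<delta>_def K_def QQ_Zv .
qed

end




lemma H3_Ab:
  assumes H: "H3 n d al au A" and d: "d \<ge> 1" and r: "0 \<le> r" and k: "k < n*d" and m: "m < n*d"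
  shows "\<bar>A r k m\<bar> \<le> au"
proof -
  have i: "k div d < n" using k by (simp add: less_mult_imp_div_less)
  have j: "m div d < n" using m by (simp add: less_mult_imp_div_less)
  have ad: "k mod d < d" "m mod d < d" using d by auto
  define \<xi> where "\<xi> = (\<lambda>b::nat. if b = m mod d then 1 else (0::real))"
  have bnd: "vnorm d (mulv d (blk d (A r) (k div d) (m div d)) \<xi>) \<le> au * vnorm d \<xi>"
    using H r i j unfolding H3_def by blast
  have v1: "vnorm d \<xi> = 1"
  proof -
    have "(\<Sum>j<d. (\<xi> j)^2) = (\<Sum>j<d. if j = m mod d then 1 else 0)"
      unfolding \<xi>_def by (intro sum.cong) auto
    also have "\<dots> = 1" using ad by simp
    finally show ?thesis unfolding vnorm_def by simp
  qed
  have mv: "mulv d (blk d (A r) (k div d) (m div d)) \<xi> a = A r ((k div d)*d + a) m" for a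
  proof -
    have "mulv d (blk d (A r) (k div d) (m div d)) \<xi> a = (\<Sum>b<d. if b = m mod d then A r ((k div d)*d+a) ((m div d)*d+b) else 0)"
      unfolding mulv_def blk_def \<xi>_def by (intro sum.cong) auto
    also have "\<dots> = A r ((k div d)*d+a) ((m div d)*d + m mod d)" using ad by simp
    also have "(m div d)*d + m mod d = m" by simp
    finally show ?thesis .
  qed
  have "\<bar>A r k m\<bar> = \<bar>mulv d (blk d (A r) (k div d) (m div d)) \<xi> (k mod d)\<bar>"
    using mv[of "k mod d"] by simp
  also have "\<dots> \<le> vnorm d (mulv d (blk d (A r) (k div d) (m div d)) \<xi>)" by (rule comp_le_vnorm[OF ad(1)])
  also have "\<dots> \<le> au" using bnd v1 by simp
  finally show ?thesis .
qed

lemma H3_band: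
  assumes H: "H3 n d al au A" and d: "d \<ge> 1" and r: "0 \<le> r" and i: "i < n*d" and m: "m < n*d"
    and im: "m div d + 1 < i div d"
  shows "A r i m = 0"
proof -
  have i': "i div d < n" using i by (simp add: less_mult_imp_div_less)
  have j': "m div d < n" using m by (simp add: less_mult_imp_div_less)
  have ad: "i mod d < d" "m mod d < d" using d by auto
  have "blk d (A r) (i div d) (m div d) (i mod d) (m mod d) = 0"
    using H r i' j' im ad unfolding H3_def by blast
  then show ?thesis unfolding blk_def by simp
qed

lemma H3_coer:
  assumes H: "H3 n d al au A" and r: "0 \<le> r" and j: "j + 1 < n"
  shows "al * (\<Sum>a<d. (\<xi> a)^2) \<le> (\<Sum>a<d. \<Sum>b<d. A r ((j+1)*d+a) (j*d+b) * \<xi> b * \<xi> a)"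
proof -
  have "j + 1 \<in> {1..<n}" using j by simp
  then have "al * (vnorm d \<xi>)\<^sup>2 \<le> (\<Sum>a<d. \<Sum>b<d. blk d (A r) (j+1) (j+1-1) a b * \<xi> b * \<xi> a)"
    using H r unfolding H3_def by blast
  then show ?thesis unfolding blk_def vnorm_sq by simp
qed

lemma H3_al: "H3 n d al au A \<Longrightarrow> al > 0" unfolding H3_def by simp




theorem lemma5p3:
  fixes n d :: nat and \<alpha> al au T0 :: real
    and A :: "real \<Rightarrow> nat \<Rightarrow> nat \<Rightarrow> real"
    and R :: "real \<Rightarrow> real \<Rightarrow> nat \<Rightarrow> nat \<Rightarrow> real"
    and Rb :: "nat \<Rightarrow> real \<Rightarrow> real \<Rightarrow> nat \<Rightarrow> nat \<Rightarrow> real"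
  assumes dn: "d \<ge> 1" "n \<ge> 1"
    and alpha: "0 < \<alpha>" "\<alpha> < 2"
    and meas: "\<And>k l. (\<lambda>r. A r k l) \<in> borel_measurable borel"
    and H3: "H3 n d al au A"
    and res: "is_resolvent (n*d) A R"
    and T0: "0 < T0" "T0 \<le> 1"
    and struct: "\<And>s t k a b. 0 \<le> t \<Longrightarrow> t \<le> s \<Longrightarrow> s \<le> t + T0 \<Longrightarrow> k < n \<Longrightarrow> a < d \<Longrightarrow> b < d \<Longrightarrow>
                   R s t (k*d+a) b = (s - t) ^ k / fact k * Rb k s t a b"
    and cont: "\<And>k a b. k < n \<Longrightarrow> a < d \<Longrightarrow> b < d \<Longrightarrow>
                   continuous_on {(s,t). 0 \<le> t \<and> t \<le> s \<and> s \<le> t + T0} (\<lambda>(s,t). Rb k s t a b)"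
    and nondeg: "\<And>s t k. 0 \<le> t \<Longrightarrow> t \<le> s \<Longrightarrow> s \<le> t + T0 \<Longrightarrow> k < n \<Longrightarrow> nondegenerate d (Rb k s t)"
    and bdd: "\<exists>K. \<forall>s t k a b. 0 \<le> t \<longrightarrow> t \<le> s \<longrightarrow> s \<le> t + T0 \<longrightarrow> k < n \<longrightarrow> a < d \<longrightarrow> b < d \<longrightarrow>
                   \<bar>Rb k s t a b\<bar> \<le> K"
  shows "\<exists>C>0. \<forall>t\<ge>0. \<forall>s\<in>{t..t+T0}. \<forall>p :: nat \<Rightarrow> real.
           integral {0..1} (\<lambda>v. vnorm d (tmulv (n*d) (Rbarv d Rb s t v) (scaleM d (s - t) p)) powr \<alpha>)
             \<ge> C * vnorm (n*d) (scaleM d (s - t) p) powr \<alpha>"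
proof -
  define N where "N = n*d"
  have Ab: "\<And>r k m. 0 \<le> r \<Longrightarrow> k < N \<Longrightarrow> m < N \<Longrightarrow> \<bar>A r k m\<bar> \<le> au"
    using H3_Ab[OF H3 dn(1)] unfolding N_def by blast
  have N1: "N \<ge> 1" unfolding N_def using dn by simp
  have au0: "au \<ge> 0" using Ab[of 0 0 0] N1 by force
  have al0: "al > 0" by (rule H3_al[OF H3])
  interpret bsys N A R au d
  proof unfold_locales
    show "\<And>r k m. 0 \<le> r \<Longrightarrow> k < N \<Longrightarrow> m < N \<Longrightarrow> \<bar>A r k m\<bar> \<le> au" by (rule Ab)
    show "au \<ge> 0" by (rule au0)
    show "\<And>k m. (\<lambda>r. A r k m) \<in> borel_measurable borel" by (rule meas)
    show "is_resolvent N A R" using res unfolding N_def .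
    show "\<And>r i m. 0 \<le> r \<Longrightarrow> i < N \<Longrightarrow> m < N \<Longrightarrow> m div d + 1 < i div d \<Longrightarrow> A r i m = 0"
      using H3_band[OF H3 dn(1)] unfolding N_def by blast
  qed
  define B where "B = exp (real N * au)"
  have B0: "B > 0" unfolding B_def by simp
  define K where "K = real N^2 * au^2 * B^2"
  define L where "L = real d * real N * B * au * B"
  have K0: "K \<ge> 0" unfolding K_def by simp
  have L0: "L \<ge> 0" unfolding L_def using B0 au0 by simp
  have ald: "al / real d > 0" using al0 dn by simp
  obtain C where C0: "C > 0" and C: "\<forall>Z. HA1 n d (al / real d) au K Z \<longrightarrow> HA2 n d L Z \<longrightarrow>
           C * QQ n d Z powr \<alpha> \<le> integral {0..1} (\<lambda>v. n1 d (Z v 0) powr \<alpha>)"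
    using abstract_main[OF ald au0 K0 L0 dn(2) alpha(1), of d] by blast
  define c where "c = (1 / sqrt (real d)) powr \<alpha>"
  have c0: "c > 0" unfolding c_def using dn by simp
  define C' where "C' = min 1 (C * c)"
  have C'0: "C' > 0" unfolding C'_def using C0 c0 by simp
  show ?thesis
  proof (intro exI[of _ C'] conjI allI impI ballI)
    show "C' > 0" by (rule C'0)
    fix t s :: real and p :: "nat \<Rightarrow> real"
    assume t: "t \<ge> 0" and s: "s \<in> {t..t+T0}"
    show "C' * vnorm (n*d) (scaleM d (s - t) p) powr \<alpha>
        \<le> integral {0..1} (\<lambda>v. vnorm d (tmulv (n*d) (Rbarv d Rb s t v) (scaleM d (s - t) p)) powr \<alpha>)"
    proof (cases "s = t")
      case True
      have s0: "0 \<le> s" using t True by simp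
      have comp: "tmulv (n*d) (Rbarv d Rb s t v) (scaleM d (s - t) p) b = p b" if b: "b < d" for v b
      proof -
        have bN: "b < N" using b blk_idx[of 0 n b d] dn N_def by auto
        have tm: "Rbarv d Rb s t v j b * scaleM d (s - t) p j = (if j = b then p j else 0)" if j: "j < N" for j
        proof (cases "j div d = 0")
          case True
          then have jd: "j < d" using dn by (simp add: div_eq_0_iff)
          have "R s s (0*d+j) b = (s - s)^0 / fact 0 * Rb 0 s s j b"
            by (rule struct) (use s0 jd b dn T0 in auto)
          then have "Rb 0 s s j b = R s s j b" by simp
          also have "\<dots> = (if j = b then 1 else 0)" using Rrefl[OF s0 j bN] by simp
          finally have "Rb 0 s s j b = (if j = b then 1 else 0)" .
          then show ?thesis unfolding Rbarv_def scaleM_def using True jd \<open>s = t\<close> by simp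
        next
          case False
          then have "j \<noteq> b" using b by auto
          then show ?thesis unfolding scaleM_def using False \<open>s = t\<close> by simp
        qed
        have "tmulv (n*d) (Rbarv d Rb s t v) (scaleM d (s - t) p) b = (\<Sum>j<N. if j = b then p j else 0)"
          unfolding tmulv_def N_def[symmetric] using tm by (intro sum.cong) auto
        also have "\<dots> = p b" using bN by simp
        finally show ?thesis .
      qed
      have vn: "vnorm d (tmulv (n*d) (Rbarv d Rb s t v) (scaleM d (s - t) p)) = vnorm d p" for v
        unfolding vnorm_def by (rule arg_cong[where f=sqrt], rule sum.cong) (auto simp: comp)
      have vn2: "vnorm (n*d) (scaleM d (s - t) p) = vnorm d p"
      proof -
        have dN: "d \<le> N" unfolding N_def using dn by simp
        have "(\<Sum>j<N. (scaleM d (s - t) p j)^2) = (\<Sum>j<d. (scaleM d (s - t) p j)^2)"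
        proof (rule sum.mono_neutral_right)
          show "finite {..<N}" by simp
          show "{..<d} \<subseteq> {..<N}" using dN by auto
          show "\<forall>i\<in>{..<N} - {..<d}. (scaleM d (s - t) p i)^2 = 0"
          proof
            fix i assume "i \<in> {..<N} - {..<d}"
            then have "i div d \<noteq> 0" using dn by (auto simp: div_eq_0_iff)
            then show "(scaleM d (s - t) p i)^2 = 0" unfolding scaleM_def using \<open>s = t\<close> by simp
          qed
        qed
        also have "\<dots> = (\<Sum>j<d. (p j)^2)" unfolding scaleM_def using \<open>s = t\<close> by (intro sum.cong) auto
        finally show ?thesis unfolding vnorm_def N_def by simp
      qed
      have "C' * vnorm (n*d) (scaleM d (s - t) p) powr \<alpha> \<le> 1 * vnorm d p powr \<alpha>"
        unfolding vn2 C'_def by (intro mult_right_mono) auto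
      also have "\<dots> = integral {0..1} (\<lambda>v. vnorm d (tmulv (n*d) (Rbarv d Rb s t v) (scaleM d (s - t) p)) powr \<alpha>)"
        unfolding vn by simp
      finally show ?thesis .
    next
      case False
      then have ts: "t < s" using s by auto
      interpret I: inst N A R au d n t s p al
      proof unfold_locales
        show "N = n*d" by (rule N_def)
        show "d \<ge> 1" "n \<ge> 1" "al > 0" "0 \<le> t" "t < s" by (fact dn(1) dn(2) al0 t ts)+
        show "s - t \<le> 1" using s T0 by simp
        show "\<And>r j \<xi>. 0 \<le> r \<Longrightarrow> j+1 < n \<Longrightarrow>
          al * (\<Sum>a<d. (\<xi> a)^2) \<le> (\<Sum>a<d. \<Sum>b<d. A r ((j+1)*d+a) (j*d+b) * \<xi> b * \<xi> a)"
          by (rule H3_coer[OF H3])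
      qed
      have hh: "I.h = s - t" unfolding I.h_def ..
      have IB: "I.B = B" unfolding I.B_def B_def ..
      have A1: "HA1 n d (al / real d) au K I.Zv" using I.HA1_Zv unfolding K_def IB .
      have A2: "HA2 n d L I.Zv" using I.HA2_Zv unfolding L_def IB .
      have main: "C * QQ n d I.Zv powr \<alpha> \<le> integral {0..1} (\<lambda>v. n1 d (I.Zv v 0) powr \<alpha>)"
        using C A1 A2 by blast
      have comp: "tmulv (n*d) (Rbarv d Rb s t v) (scaleM d (s - t) p) b = I.Zv v 0 b"
        if v: "v \<in> {0..1}" and b: "b < d" for v b
      proof -
        define u where "u = s - v * I.h"
        have uin: "t \<le> u" "u \<le> s" using I.Zv_in[of v] v unfolding u_def by auto
        have u0: "0 \<le> u" using uin t by simp
        have su: "s - u = v * (s - t)" unfolding u_def hh by simp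
        have suT: "s \<le> u + T0"
        proof -
          have "v * (s - t) \<le> 1 * (s - t)" using v ts by (intro mult_right_mono) auto
          then show ?thesis using su s by simp
        qed
        have bdiv: "b div d = 0" using b by simp
        have "I.Zv v 0 b = (\<Sum>j<N. R s u j b * p j)"
          unfolding I.Zv_def I.Z_def I.Y_def sc_def u_def using bdiv by simp
        also have "\<dots> = (\<Sum>j<N. Rbarv d Rb s t v j b * scaleM d (s - t) p j)"
        proof (rule sum.cong[OF refl])
          fix j assume j: "j \<in> {..<N}"
          define k where "k = j div d"
          define a where "a = j mod d"
          have kn: "k < n" unfolding k_def using j N_def by (simp add: less_mult_imp_div_less)
          have ad: "a < d" unfolding a_def using dn by simp
          have jka: "j = k*d + a" unfolding k_def a_def by simp
          have "R s u j b = (s - u)^k / fact k * Rb k s u a b"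
            unfolding jka by (rule struct[OF u0 uin(2) suT kn ad b])
          also have "\<dots> = Rbarv d Rb s t v j b * (s - t)^(j div d)"
            unfolding Rbarv_def su k_def[symmetric] a_def[symmetric] u_def hh
            by (simp add: power_mult_distrib)
          finally show "R s u j b * p j = Rbarv d Rb s t v j b * scaleM d (s - t) p j"
            unfolding scaleM_def by simp
        qed
        also have "\<dots> = tmulv (n*d) (Rbarv d Rb s t v) (scaleM d (s - t) p) b"
          unfolding tmulv_def N_def ..
        finally show ?thesis by simp
      qed
      have vn: "vnorm d (tmulv (n*d) (Rbarv d Rb s t v) (scaleM d (s - t) p)) = vnorm d (I.Zv v 0)"
        if v: "v \<in> {0..1}" for v
        unfolding vnorm_def by (rule arg_cong[where f=sqrt], rule sum.cong) (auto simp: comp[OF v])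
      have compc: "continuous_on {0..1} (\<lambda>v. I.Zv v 0 b)" if b: "b < d" for b
      proof (rule lip_cont[of "L * I.Q1"])
        show "L * I.Q1 \<ge> 0" using L0 I.Q1_nonneg by simp
        fix x y :: real assume xy: "x \<in> {0..1}" "y \<in> {0..1}"
        have "\<bar>I.Zv x 0 b - I.Zv y 0 b\<bar> \<le> n1 d (\<lambda>a. I.Zv x 0 a - I.Zv y 0 a)"
          unfolding n1_def using b by (intro member_le_sum) auto
        also have "\<dots> \<le> L * \<bar>x - y\<bar> * QQ n d I.Zv" using A2 xy unfolding HA2_def by auto
        finally show "\<bar>I.Zv x 0 b - I.Zv y 0 b\<bar> \<le> L * I.Q1 * \<bar>x - y\<bar>"
          unfolding I.QQ_Zv by (simp add: mult_ac)
      qed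
      have g1c: "continuous_on {0..1} (\<lambda>v. vnorm d (I.Zv v 0) powr \<alpha>)"
        unfolding vnorm_def
        by (intro continuous_on_powr' continuous_intros compc) (use alpha in \<open>auto simp: sum_nonneg\<close>)
      have g2c: "continuous_on {0..1} (\<lambda>v. c * n1 d (I.Zv v 0) powr \<alpha>)"
        unfolding n1_def
        by (intro continuous_intros continuous_on_powr' compc) (use alpha in \<open>auto simp: sum_nonneg\<close>)
      have "C' * vnorm (n*d) (scaleM d (s - t) p) powr \<alpha> \<le> (C * c) * I.Q1 powr \<alpha>"
      proof -
        have sq: "scaleM d (s - t) p = I.q" unfolding scaleM_def I.q_def sc_def hh ..
        have "vnorm N I.q \<le> I.Q1"
          unfolding I.Q1_def using vnorm_le_n1[of N I.q] unfolding n1_def .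
        then have "vnorm (n*d) (scaleM d (s - t) p) \<le> I.Q1" unfolding sq N_def by simp
        then have "vnorm (n*d) (scaleM d (s - t) p) powr \<alpha> \<le> I.Q1 powr \<alpha>"
          using alpha vnorm_nonneg by (intro powr_mono2) auto
        moreover have "C' \<le> C * c" unfolding C'_def by simp
        ultimately show ?thesis using C'0 by (intro mult_mono) auto
      qed
      also have "\<dots> = c * (C * QQ n d I.Zv powr \<alpha>)" unfolding I.QQ_Zv by simp
      also have "\<dots> \<le> c * integral {0..1} (\<lambda>v. n1 d (I.Zv v 0) powr \<alpha>)"
        using main c0 by (intro mult_left_mono) auto
      also have "\<dots> = integral {0..1} (\<lambda>v. c * n1 d (I.Zv v 0) powr \<alpha>)" by simp
      also have "\<dots> \<le> integral {0..1} (\<lambda>v. vnorm d (I.Zv v 0) powr \<alpha>)"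
      proof (rule integral_le)
        show "(\<lambda>v. c * n1 d (I.Zv v 0) powr \<alpha>) integrable_on {0..1}"
          by (rule integrable_continuous_interval[OF g2c])
        show "(\<lambda>v. vnorm d (I.Zv v 0) powr \<alpha>) integrable_on {0..1}"
          by (rule integrable_continuous_interval[OF g1c])
        fix v :: real
        have sd: "sqrt (real d) > 0" using dn by simp
        have "n1 d (I.Zv v 0) / sqrt (real d) \<le> vnorm d (I.Zv v 0)"
          using n1_le_vnorm[of d "I.Zv v 0"] sd by (simp add: divide_simps mult.commute)
        then have "(n1 d (I.Zv v 0) / sqrt (real d)) powr \<alpha> \<le> vnorm d (I.Zv v 0) powr \<alpha>"
          using alpha n1_nonneg sd by (intro powr_mono2) auto
        moreover have "(n1 d (I.Zv v 0) / sqrt (real d)) powr \<alpha> = c * n1 d (I.Zv v 0) powr \<alpha>"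
          unfolding c_def using powr_mult[of "1 / sqrt (real d)" "n1 d (I.Zv v 0)" \<alpha>] n1_nonneg sd
          by (simp add: mult.commute)
        ultimately show "c * n1 d (I.Zv v 0) powr \<alpha> \<le> vnorm d (I.Zv v 0) powr \<alpha>" by simp
      qed
      also have "\<dots> = integral {0..1} (\<lambda>v. vnorm d (tmulv (n*d) (Rbarv d Rb s t v) (scaleM d (s - t) p)) powr \<alpha>)"
        by (rule integral_cong) (simp add: vn)
      finally show ?thesis .
    qed
  qed
qed


end
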